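(* Fix $c>0$ and an integer $K\ge1$, and let $p_n=c/n$. For the SFAP exploration algorithm on $n$ vertices (described in the context), let $A_k(t)=|\mathcal{A}_k(t)|$ and $\alpha^n_k(t)=A_k(\lfloor nt\rfloor)/n$ for $t\in[0,1]$, $1\le k\le K$, and $\boldsymbol\alpha^n(t)=(\alpha^n_1(t),\dots,\alpha^n_K(t))$. For $\boldsymbol\alpha=(\alpha_1,\dots,\alpha_K)$ and $1\le k\le K$ define $$\delta_k(\boldsymbol\alpha)=e^{-c\alpha_k}\prod_{r=1}^{k-1}\big(1-e^{-c\alpha_r}\big).$$ Then the integral equations $\alpha_k(t)=\int_0^t\delta_k(\boldsymbol\alpha(s))\,ds$, $1\le k\le K$, $t\in[0,1]$, have a unique solution $\boldsymbol\alpha(t)$, and the process $\{\boldsymbol\alpha^n(t)\}_{0\le t\le1}$ converges in distribution (uniformly on $[0,1]$) to the deterministic process $\{\boldsymbol\alpha(t)\}_{0\le t\le1}$. Consequently, if $N_k(n)$ is the number of vertices using frequency $k$ in the final state of the SFAP model on $G(n,c/n)$, then for all $1\le k\le K$, $N_k(n)/n\to\alpha_k(1)$ in distribution as $n\to\infty$.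
   Context: Empty products equal one. $G(n,p_n)$ is the Erdős–Rényi random graph on $[n]$ with independent edge probability $p_n$. SFAP model: given $G(n,p_n)$, vertices are selected one at a time uniformly at random among those not yet selected; a selected vertex receives the smallest frequency in $\{1,\dots,K\}$ not used by any of its neighbours, and if all $K$ frequencies are used by neighbours it gets no frequency (frozen). $N_k(n)$ is the number of vertices with frequency $k$ after all $n$ vertices are selected. SFAP exploration algorithm: maintain $\mathcal{A}_k(t)$ ($1\le k\le K$: explored vertices with frequency $k$; $\mathcal{A}_0(t)$: explored frozen vertices) and unexplored set $\mathcal{U}(t)$, initially empty and $[n]$. At step $t+1$, select $v\in\mathcal{U}(t)$ uniformly, remove it from $\mathcal{U}$, join it to each explored vertex independently with probability $p_n$; let $\mathcal{F}_v$ be $\{1,\dots,K\}$ minus the set of $k\ge1$ such that $v$ is joined to some vertex of $\mathcal{A}_k(t)$; if $\mathcal{F}_v\neq\varnothing$, $v$ joins $\mathcal{A}_{\min\mathcal{F}_v}$, otherwise $v$ joins $\mathcal{A}_0$. Convergence in distribution of processes is understood as uniform convergence over compact sets. *)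

theory Defs
  imports "HOL-Probability.Probability" "HOL-Combinatorics.Multiset_Permutations"
begin

text \<open>States of the exploration: a partial labelling f of vertices
  (f u = Some k, k in 1..K: explored with frequency k; f u = Some 0: explored frozen;
   f u = None: unexplored) together with the unexplored set U.\<close>

type_synonym sfap_state = "(nat \<Rightarrow> nat option) \<times> nat set"

definition explore_step :: "nat \<Rightarrow> real \<Rightarrow> sfap_state \<Rightarrow> sfap_state pmf" where
  "explore_step K p s = (case s of (f, U) \<Rightarrow>
     bind_pmf (pmf_of_set U) (\<lambda>v.
     bind_pmf (Pi_pmf (dom f) False (\<lambda>_. bernoulli_pmf p)) (\<lambda>S.
       let F = {1..K} - {k. 1 \<le> k \<and> (\<exists>u\<in>dom f. S u \<and> f u = Some k)}
       in return_pmf (f(v \<mapsto> (if F = {} then 0 else Min F)), U - {v}))))"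

fun explore_traj :: "nat \<Rightarrow> real \<Rightarrow> nat \<Rightarrow> nat \<Rightarrow> sfap_state list pmf" where
  "explore_traj K p n 0 = return_pmf [(Map.empty, {1..n})]"
| "explore_traj K p n (Suc t) =
     bind_pmf (explore_traj K p n t) (\<lambda>tr. map_pmf (\<lambda>s. tr @ [s]) (explore_step K p (last tr)))"

definition A_count :: "sfap_state list \<Rightarrow> nat \<Rightarrow> nat \<Rightarrow> nat" where
  "A_count tr k t = card {u. fst (tr ! t) u = Some k}"

definition alpha_n :: "nat \<Rightarrow> sfap_state list \<Rightarrow> nat \<Rightarrow> real \<Rightarrow> real" where
  "alpha_n n tr k t = real (A_count tr k (nat \<lfloor>real n * t\<rfloor>)) / real n"

definition sfap_delta :: "real \<Rightarrow> (nat \<Rightarrow> real) \<Rightarrow> nat \<Rightarrow> real" where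
  "sfap_delta c \<alpha> k = exp (- c * \<alpha> k) * (\<Prod>r\<in>{1..<k}. 1 - exp (- c * \<alpha> r))"

definition solves_sfap_ie :: "real \<Rightarrow> nat \<Rightarrow> (real \<Rightarrow> nat \<Rightarrow> real) \<Rightarrow> bool" where
  "solves_sfap_ie c K \<alpha> \<longleftrightarrow>
     (\<forall>k\<in>{1..K}. \<forall>t\<in>{0..1}. ((\<lambda>s. sfap_delta c (\<alpha> s) k) has_integral \<alpha> t k) {0..t})"

definition erdos_renyi :: "nat \<Rightarrow> real \<Rightarrow> (nat \<Rightarrow> nat \<Rightarrow> bool) pmf" where
  "erdos_renyi n p = map_pmf (\<lambda>X v u. v \<noteq> u \<and> X (min u v, max u v))
     (Pi_pmf {(i, j). i \<in> {1..n} \<and> j \<in> {1..n} \<and> i < j} False (\<lambda>_. bernoulli_pmf p))"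

fun sfap_assign :: "nat \<Rightarrow> (nat \<Rightarrow> nat \<Rightarrow> bool) \<Rightarrow> (nat \<Rightarrow> nat option) \<Rightarrow> nat list \<Rightarrow> (nat \<Rightarrow> nat option)" where
  "sfap_assign K E g [] = g"
| "sfap_assign K E g (v # vs) =
     (let F = {1..K} - {k. \<exists>u. E v u \<and> g u = Some k}
      in sfap_assign K E (g(v \<mapsto> (if F = {} then 0 else Min F))) vs)"

definition sfap_model :: "nat \<Rightarrow> nat \<Rightarrow> real \<Rightarrow> (nat \<Rightarrow> nat option) pmf" where
  "sfap_model K n p = bind_pmf (erdos_renyi n p) (\<lambda>E.
     map_pmf (\<lambda>vs. sfap_assign K E Map.empty vs) (pmf_of_set (permutations_of_set {1..n})))"

definition N_count :: "(nat \<Rightarrow> nat option) \<Rightarrow> nat \<Rightarrow> nat" where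
  "N_count g k = card {v. g v = Some k}"

end

theory Submission
  imports Defs "HOL-Real_Asymp.Real_Asymp"
begin

primrec Qf :: "real \<Rightarrow> nat \<Rightarrow> real \<Rightarrow> real" where
  "Qf c 0 t = 1"
| "Qf c (Suc k) t = Qf c k t * (if k = 0 then 1 else 1 - 1 / (1 + c * integral {0..t} (Qf c k)))"

definition Ia :: "real \<Rightarrow> nat \<Rightarrow> real \<Rightarrow> real" where
  "Ia c k t = integral {0..t} (Qf c k)"

definition al :: "real \<Rightarrow> real \<Rightarrow> nat \<Rightarrow> real" where
  "al c t k = ln (1 + c * Ia c k t) / c"

lemma Qf_basic:
  assumes c: "c > 0"
  shows "continuous_on {0..1} (Qf c k) \<and> (\<forall>t\<in>{0..1}. 0 \<le> Qf c k t \<and> Qf c k t \<le> 1)"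
proof (induction k)
  case 0
  then show ?case by (simp add: continuous_on_const)
next
  case (Suc k)
  have cont: "continuous_on {0..1} (Qf c k)" and bnd: "\<And>t. t\<in>{0..1} \<Longrightarrow> 0 \<le> Qf c k t \<and> Qf c k t \<le> 1"
    using Suc by auto
  have int: "Qf c k integrable_on {0..1}"
    using cont integrable_continuous_real by blast
  have Icont: "continuous_on {0..1} (\<lambda>t. integral {0..t} (Qf c k))"
    using indefinite_integral_continuous_1[OF int] .
  have Inn: "0 \<le> integral {0..t} (Qf c k)" if "t \<in> {0..1}" for t
  proof -
    have "Qf c k integrable_on {0..t}"
      using int by (rule integrable_on_subinterval) (use that in auto)
    then show ?thesis
      by (rule integral_nonneg) (use bnd that in auto)
  qed
  have pos: "0 < 1 + c * integral {0..t} (Qf c k)" if "t \<in> {0..1}" for t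
    using Inn[OF that] c by (simp add: add_pos_nonneg)
  have c2: "continuous_on {0..1} (\<lambda>t. 1 - 1 / (1 + c * integral {0..t} (Qf c k)))"
    by (intro continuous_intros Icont) (use pos in force)
  have "continuous_on {0..1} (\<lambda>t. Qf c k t * (if k = 0 then 1 else 1 - 1 / (1 + c * integral {0..t} (Qf c k))))"
    by (cases "k = 0") (auto intro!: continuous_intros cont c2)
  moreover have "0 \<le> 1 - 1 / (1 + c * integral {0..t} (Qf c k)) \<and> 1 - 1 / (1 + c * integral {0..t} (Qf c k)) \<le> 1"
    if "t \<in> {0..1}" for t
    using pos[OF that] Inn[OF that] c by (auto simp: field_simps intro!: mult_nonneg_nonneg)
  ultimately show ?case
    using bnd by (auto intro!: mult_nonneg_nonneg mult_le_one)
qed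

lemma Ia_props:
  assumes c: "c > 0" and t: "t \<in> {0..1}"
  shows "0 \<le> Ia c k t" "Ia c k t \<le> t"
    "(Ia c k has_real_derivative Qf c k t) (at t within {0..1})"
proof -
  have cont: "continuous_on {0..1} (Qf c k)" and bnd: "\<And>t. t\<in>{0..1} \<Longrightarrow> 0 \<le> Qf c k t \<and> Qf c k t \<le> 1"
    using Qf_basic[OF c] by auto
  have int: "Qf c k integrable_on {0..t}"
    using cont integrable_continuous_real t
    by (meson atLeastAtMost_iff atLeastatMost_subset_iff continuous_on_subset order_refl)
  show "0 \<le> Ia c k t" unfolding Ia_def
    by (rule integral_nonneg[OF int]) (use bnd t in auto)
  have "Ia c k t \<le> integral {0..t} (\<lambda>_. 1::real)" unfolding Ia_def
    by (rule integral_le[OF int]) (use bnd t in auto)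
  then show "Ia c k t \<le> t" using t by simp
  show "(Ia c k has_real_derivative Qf c k t) (at t within {0..1})"
    using integral_has_vector_derivative[OF cont t] unfolding Ia_def
    by (simp add: has_real_derivative_iff_has_vector_derivative)
qed

definition dlt :: "real \<Rightarrow> (nat \<Rightarrow> real) \<Rightarrow> nat \<Rightarrow> real" where
  "dlt c a k = exp (- c * a k) * (\<Prod>r\<in>{1..<k}. 1 - exp (- c * a r))"

lemma exp_al: assumes c: "c > 0" and t: "t \<in> {0..1}"
  shows "exp (- c * al c t k) = 1 / (1 + c * Ia c k t)"
proof -
  have "0 < 1 + c * Ia c k t" using Ia_props(1)[OF c t] c by (simp add: add_pos_nonneg)
  then show ?thesis using c by (simp add: al_def exp_minus inverse_eq_divide)
qed

lemma prod_al: assumes c: "c > 0" and t: "t \<in> {0..1}"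
  shows "(\<Prod>r\<in>{1..<k}. 1 - exp (- c * al c t r)) = Qf c k t"
proof (induction k)
  case 0 then show ?case by simp
next
  case (Suc k)
  show ?case
  proof (cases "k = 0")
    case True then show ?thesis by simp
  next
    case False
    then have "{1..<Suc k} = insert k {1..<k}" by auto
    then show ?thesis using Suc False exp_al[OF c t, of k] by (simp add: Ia_def mult.commute)
  qed
qed

lemma al_deriv:
  assumes c: "c > 0" and t: "t \<in> {0..1}"
  shows "((\<lambda>s. al c s k) has_real_derivative dlt c (al c t) k) (at t within {0..1})"
proof -
  have pos: "0 < 1 + c * Ia c k t" using Ia_props(1)[OF c t] c by (simp add: add_pos_nonneg)
  have d1: "((\<lambda>s. 1 + c * Ia c k s) has_real_derivative c * Qf c k t) (at t within {0..1})"
    by (auto intro!: derivative_eq_intros Ia_props(3)[OF c t])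
  have d2: "((\<lambda>s. ln (1 + c * Ia c k s)) has_real_derivative (1 / (1 + c * Ia c k t)) * (c * Qf c k t)) (at t within {0..1})"
    using DERIV_chain2[OF DERIV_ln[OF pos] d1] by (simp add: inverse_eq_divide)
  have "((\<lambda>s. ln (1 + c * Ia c k s) / c) has_real_derivative (c * Qf c k t / (1 + c * Ia c k t)) / c) (at t within {0..1})"
    using DERIV_cdivide[OF d2, of c] by simp
  moreover have "(c * Qf c k t / (1 + c * Ia c k t)) / c = dlt c (al c t) k"
    unfolding dlt_def using exp_al[OF c t, of k] prod_al[OF c t, of k] c by simp
  ultimately show ?thesis unfolding al_def by simp
qed

lemma dlt_al_bounds: assumes c: "c > 0" and t: "t \<in> {0..1}"
  shows "0 \<le> dlt c (al c t) k" "dlt c (al c t) k \<le> 1"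
proof -
  have e: "dlt c (al c t) k = Qf c k t / (1 + c * Ia c k t)"
    unfolding dlt_def using exp_al[OF c t, of k] prod_al[OF c t, of k] c by simp
  have pos: "1 \<le> 1 + c * Ia c k t" using Ia_props(1)[OF c t] c by simp
  have q: "0 \<le> Qf c k t" "Qf c k t \<le> 1" using Qf_basic[OF c] t by auto
  show "0 \<le> dlt c (al c t) k" using e q pos by simp
  have "Qf c k t / (1 + c * Ia c k t) \<le> Qf c k t"
    using q pos by (simp add: divide_le_eq mult_le_cancel_left1 mult.commute)
  then show "dlt c (al c t) k \<le> 1" using e q by simp
qed

lemma al_0: "al c 0 k = 0" by (simp add: al_def Ia_def)

lemma al_solves: assumes c: "c > 0" shows "solves_sfap_ie c K (al c)"
  unfolding solves_sfap_ie_def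
proof (intro ballI)
  fix k t assume t: "t \<in> {0..(1::real)}"
  have "((\<lambda>s. dlt c (al c s) k) has_integral al c t k - al c 0 k) {0..t}"
  proof (rule fundamental_theorem_of_calculus)
    show "0 \<le> t" using t by simp
    fix x assume x: "x \<in> {0..t}"
    then have x1: "x \<in> {0..1}" using t by auto
    show "((\<lambda>s. al c s k) has_vector_derivative dlt c (al c x) k) (at x within {0..t})"
      using al_deriv[OF c x1] has_vector_derivative_within_subset[of _ _ x "{0..1}" "{0..t}"] t
      by (auto simp: has_real_derivative_iff_has_vector_derivative)
  qed
  then show "((\<lambda>s. sfap_delta c (al c s) k) has_integral al c t k) {0..t}"
    by (simp add: al_0 sfap_delta_def dlt_def)
qed

lemma al_unique_k:
  assumes c: "c > 0" and sol: "solves_sfap_ie c K \<beta>" and k: "k \<in> {1..K}"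
    and IH: "\<And>r t. r \<in> {1..<k} \<Longrightarrow> t \<in> {0..1} \<Longrightarrow> \<beta> t r = al c t r"
  shows "\<forall>t\<in>{0..1}. \<beta> t k = al c t k"
proof -
  define g where "g s = sfap_delta c (\<beta> s) k" for s
  define g' where "g' s = exp (- c * \<beta> s k) * Qf c k s" for s
  have gg': "g s = g' s" if "s \<in> {0..1}" for s
  proof -
    have "(\<Prod>r\<in>{1..<k}. 1 - exp (- c * \<beta> s r)) = (\<Prod>r\<in>{1..<k}. 1 - exp (- c * al c s r))"
      using IH that by (intro prod.cong) auto
    then show ?thesis unfolding g_def g'_def sfap_delta_def using prod_al[OF c that, of k] by simp
  qed
  have hi: "(g has_integral \<beta> t k) {0..t}" if "t \<in> {0..1}" for t
    using sol k that unfolding solves_sfap_ie_def g_def by auto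
  have int1: "g integrable_on {0..1}" using hi[of 1] by auto
  have beq: "\<beta> t k = integral {0..t} g" if "t \<in> {0..1}" for t
    using hi[OF that] by (simp add: has_integral_integrable_integral)
  have bcont: "continuous_on {0..1} (\<lambda>t. \<beta> t k)"
    using indefinite_integral_continuous_1[OF int1] by (rule continuous_on_cong[THEN iffD1, rotated 2]) (auto simp: beq)
  have Qc: "continuous_on {0..1} (Qf c k)" using Qf_basic[OF c] by auto
  have g'c: "continuous_on {0..1} g'" unfolding g'_def
    by (intro continuous_intros bcont Qc)
  have beq': "\<beta> t k = integral {0..t} g'" if "t \<in> {0..1}" for t
    using beq[OF that] that by (auto intro!: integral_cong gg')
  have bder: "((\<lambda>t. \<beta> t k) has_real_derivative g' t) (at t within {0..1})" if t: "t \<in> {0..1}" for t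
  proof -
    have "((\<lambda>u. integral {0..u} g') has_real_derivative g' t) (at t within {0..1})"
      using integral_has_vector_derivative[OF g'c t] by (simp add: has_real_derivative_iff_has_vector_derivative)
    then show ?thesis
      by (rule has_field_derivative_transform_within[where d=1]) (use t beq' in auto)
  qed
  define w where "w t = exp (c * \<beta> t k) - c * Ia c k t" for t
  have wder: "(w has_derivative (\<lambda>h. 0)) (at t within {0..1})" if t: "t \<in> {0..1}" for t
  proof -
    have D: "(w has_real_derivative (exp (c * \<beta> t k) * (c * g' t) - c * Qf c k t)) (at t within {0..1})"
      unfolding w_def
      by (auto intro!: derivative_eq_intros bder[OF t] Ia_props(3)[OF c t])
    have E: "exp (c * \<beta> t k) * (c * g' t) - c * Qf c k t = 0"
      unfolding g'_def by (simp add: exp_minus field_simps)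
    have "(w has_real_derivative 0) (at t within {0..1})" using D unfolding E .
    then show ?thesis unfolding has_field_derivative_def by (metis (no_types) lambda_zero)
  qed
  have "(g has_integral \<beta> 0 k) {0}" using hi[of 0] by simp
  then have b0: "\<beta> 0 k = 0" using has_integral_unique has_integral_refl(2) by blast
  have w0: "w 0 = 1" unfolding w_def using b0 by (simp add: Ia_def)
  show ?thesis
  proof
    fix t :: real assume t: "t \<in> {0..1}"
    have "w t = w 0"
      by (rule has_derivative_zero_unique[OF convex_real_interval(5) wder]) (use t in auto)
    then have e: "exp (c * \<beta> t k) = 1 + c * Ia c k t" using w0 unfolding w_def by simp
    have "c * \<beta> t k = ln (1 + c * Ia c k t)" using e[symmetric] by simp
    then show "\<beta> t k = al c t k" unfolding al_def using c by (simp add: field_simps)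
  qed
qed

lemma al_unique:
  assumes c: "c > 0" and sol: "solves_sfap_ie c K \<beta>"
  shows "\<forall>t\<in>{0..1}. \<forall>k\<in>{1..K}. \<beta> t k = al c t k"
proof -
  have "\<forall>t\<in>{0..1}. \<beta> t k = al c t k" if "k \<in> {1..K}" for k
    using that
  proof (induction k rule: less_induct)
    case (less k)
    show ?case
      by (rule al_unique_k[OF c sol less.prems]) (use less.IH less.prems in auto)
  qed
  then show ?thesis by auto
qed

lemma al_bounds: assumes c: "c > 0" and t: "t \<in> {0..1}"
  shows "0 \<le> al c t k" "al c t k \<le> t"
proof -
  have i: "0 \<le> Ia c k t" "Ia c k t \<le> t" using Ia_props[OF c t] by auto
  show "0 \<le> al c t k" unfolding al_def using i c by (simp add: divide_nonneg_pos)
  have "ln (1 + c * Ia c k t) \<le> c * Ia c k t" using i c by (intro ln_add_one_self_le_self) simp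
  also have "\<dots> \<le> c * t" using i c by simp
  finally show "al c t k \<le> t" unfolding al_def using c by (simp add: divide_le_eq mult.commute)
qed

lemma al_lip: assumes c: "c > 0" and s: "s \<in> {0..1}" and t: "t \<in> {0..1}" and st: "s \<le> t"
  shows "0 \<le> al c t k - al c s k" "al c t k - al c s k \<le> t - s"
proof -
  have "\<forall>x\<in>{s..t}. ((\<lambda>u. al c u k) has_real_derivative dlt c (al c x) k) (at x within {s..t})"
    using al_deriv[OF c] s t
    by (auto intro: DERIV_subset[where s="{0..1}"])
  have mvt: "\<exists>x\<in>{s..t}. al c t k - al c s k = dlt c (al c x) k * (t - s)" if "s < t"
  proof -
    have cont: "continuous_on {s..t} (\<lambda>u. al c u k)"
      using al_deriv[OF c] s t
      by (intro DERIV_continuous_on[where D="\<lambda>x. dlt c (al c x) k"]) (auto intro: DERIV_subset[where s="{0..1}"])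
    have dd: "\<And>x. s < x \<Longrightarrow> x < t \<Longrightarrow> ((\<lambda>u. al c u k) has_real_derivative dlt c (al c x) k) (at x)"
    proof -
      fix x assume x: "s < x" "x < t"
      then have x1: "x \<in> {0..1}" using s t by auto
      have "((\<lambda>u. al c u k) has_real_derivative dlt c (al c x) k) (at x within {0..1})"
        using al_deriv[OF c x1] .
      moreover have "at x within {0..1} = at x"
        using x s t by (intro at_within_interior) (auto simp: interior_atLeastAtMost_real)
      ultimately show "((\<lambda>u. al c u k) has_real_derivative dlt c (al c x) k) (at x)" by simp
    qed
    have dif: "\<And>x. s < x \<Longrightarrow> x < t \<Longrightarrow> (\<lambda>u. al c u k) differentiable (at x)"
      using dd real_differentiable_def by blast
    from MVT[OF that cont dif] obtain l z where z: "s < z" "z < t"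
      "((\<lambda>u. al c u k) has_real_derivative l) (at z)" "al c t k - al c s k = (t - s) * l"
      by blast
    have "l = dlt c (al c z) k"
      using DERIV_unique[OF z(3) dd[OF z(1,2)]] .
    then show ?thesis using z by (auto simp: mult.commute)
  qed
  have "0 \<le> al c t k - al c s k \<and> al c t k - al c s k \<le> t - s"
  proof (cases "s < t")
    case True
    then obtain x where x: "x \<in> {s..t}" "al c t k - al c s k = dlt c (al c x) k * (t - s)" using mvt by blast
    have x1: "x \<in> {0..1}" using x s t by auto
    show ?thesis using x dlt_al_bounds[OF c x1, of k] True
      by (auto intro!: mult_nonneg_nonneg mult_left_le_one_le)
  next
    case False then show ?thesis using st by simp
  qed
  then show "0 \<le> al c t k - al c s k" "al c t k - al c s k \<le> t - s" by auto
qed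

lemma prob_bind_pmf:
  "measure_pmf.prob (bind_pmf M N) X = (\<integral>x. measure_pmf.prob (N x) X \<partial>M)"
proof -
  have "ennreal (measure_pmf.prob (bind_pmf M N) X) = emeasure (bind_pmf M N) X"
    by (simp add: measure_pmf.emeasure_eq_measure)
  also have "\<dots> = (\<integral>\<^sup>+x. emeasure (N x) X \<partial>M)" by simp
  also have "\<dots> = (\<integral>\<^sup>+x. ennreal (measure_pmf.prob (N x) X) \<partial>M)"
    by (simp add: measure_pmf.emeasure_eq_measure)
  also have "\<dots> = ennreal (\<integral>x. measure_pmf.prob (N x) X \<partial>M)"
    by (rule nn_integral_eq_integral) (auto intro!: measure_pmf.integrable_const_bound[where B=1])
  finally show ?thesis
    by (subst (asm) ennreal_inj) (auto intro: integral_nonneg)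
qed

definition cntD :: "nat set \<Rightarrow> (nat \<Rightarrow> nat option) \<Rightarrow> nat \<Rightarrow> nat" where
  "cntD D f j = card {u\<in>D. f u = Some j}"

definition EvS :: "nat set \<Rightarrow> (nat \<Rightarrow> nat option) \<Rightarrow> nat set \<Rightarrow> nat set \<Rightarrow> (nat \<Rightarrow> bool) set" where
  "EvS D f J1 J0 = {S. (\<forall>j\<in>J1. \<exists>u\<in>D. f u = Some j \<and> S u) \<and> (\<forall>j\<in>J0. \<forall>u\<in>D. f u = Some j \<longrightarrow> \<not> S u)}"

lemma cntD_insert: "finite D \<Longrightarrow> x \<notin> D \<Longrightarrow> cntD (insert x D) f j = cntD D f j + (if f x = Some j then 1 else 0)"
proof -
  assume D: "finite D" "x \<notin> D"
  show ?thesis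
  proof (cases "f x = Some j")
    case True
    then have "{u\<in>insert x D. f u = Some j} = insert x {u\<in>D. f u = Some j}" by auto
    then show ?thesis using D True by (simp add: cntD_def)
  next
    case False
    then have "{u\<in>insert x D. f u = Some j} = {u\<in>D. f u = Some j}" by auto
    then show ?thesis using False by (simp add: cntD_def)
  qed
qed

lemma prob_EvS:
  fixes p :: real
  assumes D: "finite D" and J: "finite J1" "finite J0" "J1 \<inter> J0 = {}" and p: "0 \<le> p" "p \<le> 1"
  shows "measure_pmf.prob (Pi_pmf D False (\<lambda>_. bernoulli_pmf p)) (EvS D f J1 J0)
       = (\<Prod>j\<in>J1. 1 - (1 - p) ^ cntD D f j) * (\<Prod>j\<in>J0. (1 - p) ^ cntD D f j)"
  using D J(1,3)
proof (induction D arbitrary: J1 rule: finite_induct)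
  case empty
  show ?case
  proof (cases "J1 = {}")
    case True then show ?thesis by (simp add: EvS_def cntD_def)
  next
    case False
    then obtain j where "j \<in> J1" by auto
    then have "(\<Prod>j\<in>J1. 1 - (1 - p) ^ cntD {} f j) = 0"
      using empty.prems by (intro prod_zero) (auto simp: cntD_def)
    moreover have "EvS {} f J1 J0 = {}" using False by (auto simp: EvS_def)
    ultimately show ?thesis by simp
  qed
next
  case (insert x D)
  let ?P = "Pi_pmf D False (\<lambda>_. bernoulli_pmf p)"
  let ?E = "\<lambda>y. {S. S(x := y) \<in> EvS (insert x D) f J1 J0}"
  let ?F = "\<lambda>D J1. (\<Prod>j\<in>J1. 1 - (1 - p) ^ cntD D f j) * (\<Prod>j\<in>J0. (1 - p) ^ cntD D f j)"
  have "Pi_pmf (insert x D) False (\<lambda>_. bernoulli_pmf p) =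
          bind_pmf (bernoulli_pmf p) (\<lambda>y. map_pmf (\<lambda>S. S(x := y)) ?P)"
    using insert.hyps by (simp add: Pi_pmf_insert' map_pmf_def)
  then have "measure_pmf.prob (Pi_pmf (insert x D) False (\<lambda>_. bernoulli_pmf p)) (EvS (insert x D) f J1 J0)
      = p * measure_pmf.prob ?P (?E True) + (1 - p) * measure_pmf.prob ?P (?E False)"
    using p by (simp add: prob_bind_pmf measure_map_pmf vimage_def)
  also have "\<dots> = ?F (insert x D) J1"
  proof -
    have upd: "(S(x := y)) u = S u" if "u \<in> D" for S y u using that insert.hyps by auto
    have cnt: "cntD (insert x D) f j = cntD D f j + (if f x = Some j then 1 else 0)" for j
      using insert.hyps by (rule cntD_insert)
    show ?thesis
    proof (cases "\<exists>j. f x = Some j \<and> j \<in> J1")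
      case True
      then obtain j where j: "f x = Some j" "j \<in> J1" by auto
      have jn: "j \<notin> J0" using j insert.prems by auto
      have e1: "?E True = EvS D f (J1 - {j}) J0"
        using j jn insert.hyps by (auto simp: EvS_def upd; metis option.inject)
      have e2: "?E False = EvS D f J1 J0"
        using j insert.hyps by (auto simp: EvS_def upd; metis option.inject)
      have IH1: "measure_pmf.prob ?P (?E True) = ?F D (J1 - {j})"
        unfolding e1 by (rule insert.IH) (use insert.prems in auto)
      have IH2: "measure_pmf.prob ?P (?E False) = ?F D J1"
        unfolding e2 by (rule insert.IH) (use insert.prems in auto)
      define A where "A = (\<Prod>i\<in>J1 - {j}. 1 - (1 - p) ^ cntD D f i)"
      define B where "B = (\<Prod>i\<in>J0. (1 - p) ^ cntD D f i)"
      have pr1: "(\<Prod>i\<in>J1. 1 - (1 - p) ^ cntD D f i) = (1 - (1 - p) ^ cntD D f j) * A"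
        unfolding A_def using j insert.prems by (subst prod.remove[of _ j]) auto
      have pr2: "(\<Prod>i\<in>J1. 1 - (1 - p) ^ cntD (insert x D) f i) = (1 - (1 - p) ^ (cntD D f j + 1)) * A"
        unfolding A_def using j insert.prems
        by (subst prod.remove[of _ j]) (auto simp: cnt intro!: prod.cong)
      have pr3: "(\<Prod>i\<in>J0. (1 - p) ^ cntD (insert x D) f i) = B"
        unfolding B_def using j jn by (intro prod.cong) (auto simp: cnt)
      show ?thesis
        unfolding IH1 IH2 pr1 pr2 pr3 unfolding A_def[symmetric] B_def[symmetric]
        by (simp add: algebra_simps)
    next
      case False
      note F = False
      show ?thesis
      proof (cases "\<exists>j. f x = Some j \<and> j \<in> J0")
        case True
        then obtain j where j: "f x = Some j" "j \<in> J0" by auto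
        have e1: "?E True = {}"
          using j insert.hyps by (auto simp: EvS_def upd)
        have e2: "?E False = EvS D f J1 J0"
          using j insert.hyps F by (auto simp: EvS_def upd; metis option.inject)
        have IH2: "measure_pmf.prob ?P (?E False) = ?F D J1"
          unfolding e2 by (rule insert.IH) (use insert.prems in auto)
        define B where "B = (\<Prod>i\<in>J0 - {j}. (1 - p) ^ cntD D f i)"
        have pr1: "(\<Prod>i\<in>J0. (1 - p) ^ cntD D f i) = (1 - p) ^ cntD D f j * B"
          unfolding B_def using j J by (subst prod.remove[of _ j]) auto
        have pr2: "(\<Prod>i\<in>J0. (1 - p) ^ cntD (insert x D) f i) = (1 - p) ^ (cntD D f j + 1) * B"
          unfolding B_def using j J
          by (subst prod.remove[of _ j]) (auto simp: cnt intro!: prod.cong)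
        have pr3: "(\<Prod>i\<in>J1. 1 - (1 - p) ^ cntD (insert x D) f i) = (\<Prod>i\<in>J1. 1 - (1 - p) ^ cntD D f i)"
          using j F by (intro prod.cong) (auto simp: cnt)
        show ?thesis
          unfolding e1 IH2 pr2 pr3 pr1 by (simp add: algebra_simps)
      next
        case False
        have e1: "?E y = EvS D f J1 J0" for y
          using F False insert.hyps by (auto simp: EvS_def upd; metis option.inject)
        have IH2: "measure_pmf.prob ?P (EvS D f J1 J0) = ?F D J1"
          by (rule insert.IH) (use insert.prems in auto)
        have pr2: "(\<Prod>i\<in>J0. (1 - p) ^ cntD (insert x D) f i) = (\<Prod>i\<in>J0. (1 - p) ^ cntD D f i)"
          using F False by (intro prod.cong) (auto simp: cnt)
        have pr3: "(\<Prod>i\<in>J1. 1 - (1 - p) ^ cntD (insert x D) f i) = (\<Prod>i\<in>J1. 1 - (1 - p) ^ cntD D f i)"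
          using F False by (intro prod.cong) (auto simp: cnt)
        show ?thesis
          unfolding e1 IH2 pr2 pr3 by (simp add: algebra_simps)
      qed
    qed
  qed
  finally show ?case .
qed

lemma integral_bind_pmf_fin:
  fixes g :: "'b \<Rightarrow> real"
  assumes "finite (set_pmf M)" "\<And>x. x \<in> set_pmf M \<Longrightarrow> finite (set_pmf (N x))"
  shows "measure_pmf.expectation (bind_pmf M N) g = measure_pmf.expectation M (\<lambda>x. measure_pmf.expectation (N x) g)"
proof -
  have "measure_pmf.expectation (bind_pmf M N) g = (\<Sum>a\<in>set_pmf M. pmf M a *\<^sub>R measure_pmf.expectation (N a) g)"
    using assms by (intro pmf_expectation_bind) auto
  also have "\<dots> = measure_pmf.expectation M (\<lambda>x. measure_pmf.expectation (N x) g)"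
    using assms by (subst integral_measure_pmf[of "set_pmf M"]) auto
  finally show ?thesis .
qed

definition cnt :: "(nat \<Rightarrow> nat option) \<Rightarrow> nat \<Rightarrow> nat" where
  "cnt f k = card {u. f u = Some k}"

definition qk :: "real \<Rightarrow> (nat \<Rightarrow> nat option) \<Rightarrow> nat \<Rightarrow> real" where
  "qk p f k = (1 - p) ^ cnt f k * (\<Prod>r\<in>{1..<k}. 1 - (1 - p) ^ cnt f r)"

definition invS :: "nat \<Rightarrow> nat \<Rightarrow> sfap_state \<Rightarrow> bool" where
  "invS n K s \<longleftrightarrow> finite (snd s) \<and> snd s \<subseteq> {1..n} \<and> dom (fst s) = {1..n} - snd s \<and> (\<forall>u k. fst s u = Some k \<longrightarrow> k \<le> K)"

definition colS :: "nat \<Rightarrow> (nat \<Rightarrow> nat option) \<Rightarrow> (nat \<Rightarrow> bool) \<Rightarrow> nat" where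
  "colS K f S = (let F = {1..K} - {k. 1 \<le> k \<and> (\<exists>u\<in>dom f. S u \<and> f u = Some k)} in if F = {} then 0 else Min F)"

lemma explore_step_alt:
  "explore_step K p (f, U) = bind_pmf (pmf_of_set U) (\<lambda>v. map_pmf (\<lambda>S. (f(v \<mapsto> colS K f S), U - {v})) (Pi_pmf (dom f) False (\<lambda>_. bernoulli_pmf p)))"
  unfolding explore_step_def colS_def map_pmf_def by (simp add: Let_def)

lemma colS_le: "colS K f S \<le> K"
proof -
  let ?F = "{1..K} - {k. 1 \<le> k \<and> (\<exists>u\<in>dom f. S u \<and> f u = Some k)}"
  have "?F \<noteq> {} \<Longrightarrow> Min ?F \<in> ?F" by (intro Min_in) auto
  then show ?thesis unfolding colS_def Let_def by auto
qed

lemma colS_eq_iff: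
  assumes k: "k \<in> {1..K}"
  shows "colS K f S = k \<longleftrightarrow> S \<in> EvS (dom f) f {1..<k} {k}"
proof -
  define F where "F = {1..K} - {k. 1 \<le> k \<and> (\<exists>u\<in>dom f. S u \<and> f u = Some k)}"
  have finF: "finite F" unfolding F_def by auto
  have "colS K f S = k \<longleftrightarrow> k \<in> F \<and> (\<forall>r\<in>{1..<k}. r \<notin> F)"
  proof
    assume c: "colS K f S = k"
    then have Fne: "F \<noteq> {}" using k unfolding colS_def Let_def F_def[symmetric] by (auto split: if_splits)
    then have m: "Min F = k" using c unfolding colS_def Let_def F_def[symmetric] by auto
    then have "k \<in> F" using Min_in[OF finF Fne] by simp
    moreover have "\<forall>r\<in>{1..<k}. r \<notin> F" using m Min_le[OF finF] by fastforce
    ultimately show "k \<in> F \<and> (\<forall>r\<in>{1..<k}. r \<notin> F)" by blast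
  next
    assume a: "k \<in> F \<and> (\<forall>r\<in>{1..<k}. r \<notin> F)"
    then have Fne: "F \<noteq> {}" by auto
    have "Min F = k"
    proof (rule Min_eqI[OF finF])
      fix y assume y: "y \<in> F"
      then have "1 \<le> y" unfolding F_def by auto
      then show "k \<le> y" using a y by (meson atLeastLessThan_iff not_le)
    qed (use a in auto)
    then show "colS K f S = k" using Fne unfolding colS_def Let_def F_def[symmetric] by simp
  qed
  also have "\<dots> \<longleftrightarrow> S \<in> EvS (dom f) f {1..<k} {k}"
    using k unfolding F_def EvS_def by (auto simp: dom_def) (metis atLeastLessThan_iff)+
  finally show ?thesis .
qed

lemma finite_set_Pi_bern: "finite D \<Longrightarrow> finite (set_pmf (Pi_pmf D False (\<lambda>_. bernoulli_pmf p)))"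
  by (subst set_Pi_pmf) (auto intro!: finite_PiE_dflt)

lemma set_explore_step:
  assumes "finite U" "U \<noteq> {}"
  shows "set_pmf (explore_step K p (f, U)) \<subseteq> (\<lambda>(v,j). (f(v \<mapsto> j), U - {v})) ` (U \<times> {0..K})"
proof
  fix s assume "s \<in> set_pmf (explore_step K p (f, U))"
  then obtain v S where v: "v \<in> U" and s: "s = (f(v \<mapsto> colS K f S), U - {v})"
    using assms unfolding explore_step_alt by auto
  then show "s \<in> (\<lambda>(v,j). (f(v \<mapsto> j), U - {v})) ` (U \<times> {0..K})"
    using colS_le[of K f S] by force
qed

lemma finite_explore_step:
  assumes "finite U" "U \<noteq> {}"
  shows "finite (set_pmf (explore_step K p (f, U)))"
  by (rule finite_subset[OF set_explore_step[OF assms]]) (use assms in auto)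

lemma cnt_upd: "v \<notin> dom f \<Longrightarrow> finite (dom f) \<Longrightarrow> cnt (f(v \<mapsto> j)) k = cnt f k + (if j = k then 1 else 0)"
proof -
  assume v: "v \<notin> dom f" and fin: "finite (dom f)"
  have fk: "finite {u. f u = Some k}" using fin by (rule finite_subset[rotated]) auto
  show ?thesis
  proof (cases "j = k")
    case True
    then have "{u. (f(v \<mapsto> j)) u = Some k} = insert v {u. f u = Some k}" by auto
    moreover have "v \<notin> {u. f u = Some k}" using v by auto
    ultimately show ?thesis using True fk by (simp add: cnt_def)
  next
    case False
    then have "{u. (f(v \<mapsto> j)) u = Some k} = {u. f u = Some k}" using v by auto
    then show ?thesis using False by (simp add: cnt_def)
  qed
qed

lemma cntD_dom: "cntD (dom f) f j = cnt f j"
  unfolding cntD_def cnt_def by (rule arg_cong[where f=card]) auto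

lemma prob_colS:
  assumes k: "k \<in> {1..K}" and fin: "finite (dom f)" and p: "0 \<le> p" "p \<le> 1"
  shows "measure_pmf.prob (Pi_pmf (dom f) False (\<lambda>_. bernoulli_pmf p)) {S. colS K f S = k} = qk p f k"
proof -
  have "{S. colS K f S = k} = EvS (dom f) f {1..<k} {k}" using colS_eq_iff[OF k] by auto
  then show ?thesis
    using prob_EvS[OF fin _ _ _ p, of "{1..<k}" "{k}" f]
    by (simp add: qk_def cntD_dom mult.commute)
qed

lemma expect_step:
  assumes k: "k \<in> {1..K}" and inv: "invS n K (f, U)" and U: "U \<noteq> {}" and p: "0 \<le> p" "p \<le> 1"
  shows "measure_pmf.expectation (explore_step K p (f, U)) (\<lambda>s. real (cnt (fst s) k)) = real (cnt f k) + qk p f k"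
proof -
  have finU: "finite U" and domf: "dom f = {1..n} - U" using inv by (auto simp: invS_def)
  have fin: "finite (dom f)" using domf by simp
  let ?P = "Pi_pmf (dom f) False (\<lambda>_. bernoulli_pmf p)"
  have inner: "measure_pmf.expectation (map_pmf (\<lambda>S. (f(v \<mapsto> colS K f S), U - {v})) ?P) (\<lambda>s. real (cnt (fst s) k))
      = real (cnt f k) + qk p f k" if v: "v \<in> U" for v
  proof -
    have vd: "v \<notin> dom f" using v domf by auto
    have "measure_pmf.expectation (map_pmf (\<lambda>S. (f(v \<mapsto> colS K f S), U - {v})) ?P) (\<lambda>s. real (cnt (fst s) k))
        = measure_pmf.expectation ?P (\<lambda>S. real (cnt f k) + indicator {S. colS K f S = k} S)"
      by (auto simp: cnt_upd[OF vd fin] indicator_def intro!: Bochner_Integration.integral_cong)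
    also have "\<dots> = real (cnt f k) + measure_pmf.prob ?P {S. colS K f S = k}"
      by (subst Bochner_Integration.integral_add) (auto intro!: integrable_measure_pmf_finite finite_set_Pi_bern fin)
    finally show ?thesis using prob_colS[OF k fin p] by simp
  qed
  have "measure_pmf.expectation (explore_step K p (f, U)) (\<lambda>s. real (cnt (fst s) k))
      = measure_pmf.expectation (pmf_of_set U) (\<lambda>v. measure_pmf.expectation (map_pmf (\<lambda>S. (f(v \<mapsto> colS K f S), U - {v})) ?P) (\<lambda>s. real (cnt (fst s) k)))"
    unfolding explore_step_alt
    by (rule integral_bind_pmf_fin) (use finU U fin finite_set_Pi_bern in auto)
  also have "\<dots> = measure_pmf.expectation (pmf_of_set U) (\<lambda>v. real (cnt f k) + qk p f k)"
    by (intro integral_cong_AE) (use inner finU U in \<open>auto simp: AE_measure_pmf_iff\<close>)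
  also have "\<dots> = real (cnt f k) + qk p f k" by simp
  finally show ?thesis .
qed

definition TRP :: "nat \<Rightarrow> nat \<Rightarrow> nat \<Rightarrow> sfap_state list \<Rightarrow> bool" where
  "TRP n K t tr \<longleftrightarrow> length tr = Suc t \<and> tr ! 0 = (Map.empty, {1..n}) \<and>
     (\<forall>i\<le>t. invS n K (tr ! i) \<and> card (snd (tr ! i)) = n - i) \<and>
     (\<forall>i<t. \<exists>v j. v \<in> snd (tr ! i) \<and> tr ! Suc i = ((fst (tr ! i))(v \<mapsto> j), snd (tr ! i) - {v}))"

lemma last_len: "length tr = Suc t \<Longrightarrow> last tr = tr ! t"
  by (cases tr rule: rev_cases) auto

lemma set_traj_Suc:
  "set_pmf (explore_traj K p n (Suc t)) = (\<Union>tr\<in>set_pmf (explore_traj K p n t). (\<lambda>s. tr @ [s]) ` set_pmf (explore_step K p (last tr)))"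
  by auto

lemma traj_props:
  assumes "t \<le> n"
  shows "finite (set_pmf (explore_traj K p n t)) \<and> (\<forall>tr\<in>set_pmf (explore_traj K p n t). TRP n K t tr)"
  using assms
proof (induction t)
  case 0
  then show ?case by (auto simp: TRP_def invS_def)
next
  case (Suc t)
  then have IH: "finite (set_pmf (explore_traj K p n t))" "\<And>tr. tr \<in> set_pmf (explore_traj K p n t) \<Longrightarrow> TRP n K t tr"
    by auto
  have lastU: "finite (snd (last tr)) \<and> snd (last tr) \<noteq> {}" if "tr \<in> set_pmf (explore_traj K p n t)" for tr
  proof -
    have T: "TRP n K t tr" using IH(2)[OF that] .
    then have l: "last tr = tr ! t" by (simp add: TRP_def last_len)
    have "invS n K (tr ! t)" "card (snd (tr ! t)) = n - t" using T by (auto simp: TRP_def)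
    then show ?thesis using l Suc.prems by (auto simp: invS_def)
  qed
  have fin: "finite (set_pmf (explore_traj K p n (Suc t)))"
    unfolding set_traj_Suc
  proof (intro finite_UN_I IH(1) finite_imageI)
    fix tr assume tr: "tr \<in> set_pmf (explore_traj K p n t)"
    obtain f U where fU: "last tr = (f, U)" by fastforce
    show "finite (set_pmf (explore_step K p (last tr)))"
      using finite_explore_step[of U K p f] lastU[OF tr] fU by auto
  qed
  have "TRP n K (Suc t) tr'" if tr': "tr' \<in> set_pmf (explore_traj K p n (Suc t))" for tr'
  proof -
    obtain tr s where tr: "tr \<in> set_pmf (explore_traj K p n t)" and s: "s \<in> set_pmf (explore_step K p (last tr))"
      and e: "tr' = tr @ [s]"
      using tr' unfolding set_traj_Suc by auto
    have T: "TRP n K t tr" using IH(2)[OF tr] .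
    have len: "length tr = Suc t" using T by (simp add: TRP_def)
    have l: "last tr = tr ! t" using len by (simp add: last_len)
    obtain f U where fU: "tr ! t = (f, U)" by fastforce
    have inv: "invS n K (f, U)" and cU: "card U = n - t" using T fU by (auto simp: TRP_def)
    have Ufin: "finite U" "U \<noteq> {}" using lastU[OF tr] l fU by auto
    obtain v j where vj: "v \<in> U" "j \<le> K" "s = (f(v \<mapsto> j), U - {v})"
      using set_explore_step[OF Ufin, of K p f] s l fU by auto
    have invs: "invS n K s" using inv vj unfolding invS_def by auto
    have cs: "card (snd s) = n - Suc t" using vj cU Ufin by simp
    have nth1: "tr' ! i = tr ! i" if "i \<le> t" for i using that len e by (simp add: nth_append)
    have nth2: "tr' ! Suc t = s" using len e by (simp add: nth_append)
    show ?thesis unfolding TRP_def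
    proof (intro conjI allI impI)
      show "length tr' = Suc (Suc t)" using e len by simp
      show "tr' ! 0 = (Map.empty, {1..n})" using nth1[of 0] T by (simp add: TRP_def)
      fix i assume i: "i \<le> Suc t"
      show "invS n K (tr' ! i)"
        using T nth1 nth2 invs i by (cases "i = Suc t") (auto simp: TRP_def)
      show "card (snd (tr' ! i)) = n - i"
        using T nth1 nth2 cs i by (cases "i = Suc t") (auto simp: TRP_def)
    next
      fix i assume i: "i < Suc t"
      show "\<exists>v j. v \<in> snd (tr' ! i) \<and> tr' ! Suc i = ((fst (tr' ! i))(v \<mapsto> j), snd (tr' ! i) - {v})"
      proof (cases "i = t")
        case True
        then show ?thesis using nth1[of t] nth2 fU vj by auto
      next
        case False
        then have "i < t" using i by simp
        then show ?thesis using T nth1[of i] nth1[of "Suc i"] by (auto simp: TRP_def)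
      qed
    qed
  qed
  then show ?case using fin by blast
qed

lemma traj_prefix:
  assumes "t \<le> T" "T \<le> n"
  shows "map_pmf (take (Suc t)) (explore_traj K p n T) = explore_traj K p n t"
  using assms
proof (induction T)
  case 0
  then have "t = 0" by simp
  then show ?case by simp
next
  case (Suc T)
  show ?case
  proof (cases "t = Suc T")
    case True
    have "map_pmf (take (Suc t)) (explore_traj K p n (Suc T)) = map_pmf id (explore_traj K p n (Suc T))"
      using traj_props[OF Suc.prems(2), of K p] True
      by (intro map_pmf_cong refl) (auto simp: TRP_def)
    then show ?thesis using True by simp
  next
    case False
    then have tT: "t \<le> T" using Suc.prems by simp
    have len: "\<And>tr. tr \<in> set_pmf (explore_traj K p n T) \<Longrightarrow> length tr = Suc T"
      using traj_props[of T n K p] Suc.prems by (auto simp: TRP_def)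
    have "map_pmf (take (Suc t)) (explore_traj K p n (Suc T))
        = bind_pmf (explore_traj K p n T) (\<lambda>tr. map_pmf (\<lambda>s. take (Suc t) (tr @ [s])) (explore_step K p (last tr)))"
      by (simp add: map_bind_pmf pmf.map_comp o_def)
    also have "\<dots> = bind_pmf (explore_traj K p n T) (\<lambda>tr. return_pmf (take (Suc t) tr))"
    proof (intro bind_pmf_cong refl)
      fix tr assume "tr \<in> set_pmf (explore_traj K p n T)"
      then have "length tr = Suc T" by (rule len)
      then have "\<And>s. take (Suc t) (tr @ [s]) = take (Suc t) tr" using tT by simp
      then show "map_pmf (\<lambda>s. take (Suc t) (tr @ [s])) (explore_step K p (last tr)) = return_pmf (take (Suc t) tr)"
        by (simp add: map_pmf_const)
    qed
    also have "\<dots> = map_pmf (take (Suc t)) (explore_traj K p n T)" by (simp add: map_pmf_def)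
    also have "\<dots> = explore_traj K p n t" using Suc.IH tT Suc.prems by simp
    finally show ?thesis .
  qed
qed

definition Mk :: "real \<Rightarrow> nat \<Rightarrow> sfap_state list \<Rightarrow> nat \<Rightarrow> real" where
  "Mk p k tr t = real (cnt (fst (tr ! t)) k) - (\<Sum>s<t. qk p (fst (tr ! s)) k)"

lemma qk_bounds: "0 \<le> p \<Longrightarrow> p \<le> 1 \<Longrightarrow> 0 \<le> qk p f k \<and> qk p f k \<le> 1"
  unfolding qk_def
  by (auto intro!: mult_nonneg_nonneg prod_nonneg mult_le_one prod_le_1 power_le_one)

lemma expect_sq_le:
  fixes N :: "'a pmf" and D :: "'a \<Rightarrow> real"
  assumes fin: "finite (set_pmf N)" and E0: "measure_pmf.expectation N D = 0"
    and b: "\<And>s. s \<in> set_pmf N \<Longrightarrow> \<bar>D s\<bar> \<le> 1"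
  shows "measure_pmf.expectation N (\<lambda>s. (m + D s)\<^sup>2) \<le> m\<^sup>2 + 1"
proof -
  have I: "integrable N h" for h :: "'a \<Rightarrow> real" using fin by (rule integrable_measure_pmf_finite)
  have "measure_pmf.expectation N (\<lambda>s. (m + D s)\<^sup>2) = measure_pmf.expectation N (\<lambda>s. m\<^sup>2 + (2 * m * D s + (D s)\<^sup>2))"
    by (simp add: power2_eq_square algebra_simps)
  also have "\<dots> = m\<^sup>2 + (2 * m * measure_pmf.expectation N D + measure_pmf.expectation N (\<lambda>s. (D s)\<^sup>2))"
    using I by simp
  also have "measure_pmf.expectation N (\<lambda>s. (D s)\<^sup>2) \<le> measure_pmf.expectation N (\<lambda>s. 1)"
  proof (rule integral_mono_AE[OF I I])
    show "AE x in measure_pmf N. (D x)\<^sup>2 \<le> 1"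
      using b by (auto simp: AE_measure_pmf_iff abs_square_le_1)
  qed
  finally show ?thesis using E0 by simp
qed

lemma Mk_sq:
  assumes k: "k \<in> {1..K}" and p: "0 \<le> p" "p \<le> 1" and t: "t \<le> n"
  shows "measure_pmf.expectation (explore_traj K p n t) (\<lambda>tr. (Mk p k tr t)\<^sup>2) \<le> real t"
  using t
proof (induction t)
  case 0
  have "Mk p k [(Map.empty, {1..n})] 0 = 0" by (simp add: Mk_def cnt_def)
  then show ?case by simp
next
  case (Suc t)
  have tn: "t \<le> n" using Suc.prems by simp
  note TP = traj_props[OF tn, of K p]
  have stepfin: "finite (set_pmf (explore_step K p (last tr)))" and lastinv: "invS n K (last tr)" and lastne: "snd (last tr) \<noteq> {}"
    and lastn: "last tr = tr ! t" and len: "length tr = Suc t"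
    if tr: "tr \<in> set_pmf (explore_traj K p n t)" for tr
  proof -
    have T: "TRP n K t tr" using TP tr by auto
    show l: "last tr = tr ! t" and "length tr = Suc t" using T by (auto simp: TRP_def last_len)
    show "invS n K (last tr)" using T l by (auto simp: TRP_def)
    have "card (snd (last tr)) = n - t" using T l by (auto simp: TRP_def)
    then show ne: "snd (last tr) \<noteq> {}" using Suc.prems by auto
    obtain f U where fU: "last tr = (f, U)" by fastforce
    show "finite (set_pmf (explore_step K p (last tr)))"
      using finite_explore_step[of U K p f] ne \<open>invS n K (last tr)\<close> fU by (auto simp: invS_def)
  qed
  have "measure_pmf.expectation (explore_traj K p n (Suc t)) (\<lambda>tr. (Mk p k tr (Suc t))\<^sup>2)
     = measure_pmf.expectation (explore_traj K p n t)
         (\<lambda>tr. measure_pmf.expectation (map_pmf (\<lambda>s. tr @ [s]) (explore_step K p (last tr))) (\<lambda>tr. (Mk p k tr (Suc t))\<^sup>2))"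
    by (simp only: explore_traj.simps(2), rule integral_bind_pmf_fin) (use TP stepfin in auto)
  also have "\<dots> \<le> measure_pmf.expectation (explore_traj K p n t) (\<lambda>tr. (Mk p k tr t)\<^sup>2 + 1)"
  proof (rule integral_mono_AE)
    show "integrable (measure_pmf (explore_traj K p n t)) h" for h :: "_ \<Rightarrow> real"
      using TP by (auto intro: integrable_measure_pmf_finite)
    then show "integrable (measure_pmf (explore_traj K p n t)) h" for h :: "_ \<Rightarrow> real" .
    show "AE tr in measure_pmf (explore_traj K p n t).
        measure_pmf.expectation (map_pmf (\<lambda>s. tr @ [s]) (explore_step K p (last tr))) (\<lambda>tr. (Mk p k tr (Suc t))\<^sup>2)
        \<le> (Mk p k tr t)\<^sup>2 + 1"
    proof (unfold AE_measure_pmf_iff, intro ballI)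
      fix tr assume tr: "tr \<in> set_pmf (explore_traj K p n t)"
      obtain f U where fU: "last tr = (f, U)" by fastforce
      have ft: "fst (tr ! t) = f" using lastn[OF tr] fU by (metis fst_conv)
      define D where "D s = real (cnt (fst s) k) - (real (cnt f k) + qk p f k)" for s :: sfap_state
      have Mx: "Mk p k (tr @ [s]) (Suc t) = Mk p k tr t + D s" for s
      proof -
        have "(\<Sum>i<Suc t. qk p (fst ((tr @ [s]) ! i)) k) = (\<Sum>i<t. qk p (fst (tr ! i)) k) + qk p f k"
          using len[OF tr] ft by (simp add: nth_append)
        then show ?thesis using len[OF tr] ft unfolding Mk_def D_def by (simp add: nth_append)
      qed
      have inv: "invS n K (f, U)" using lastinv[OF tr] fU by simp
      have Une: "U \<noteq> {}" using lastne[OF tr] fU by simp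
      have E0: "measure_pmf.expectation (explore_step K p (f, U)) D = 0"
      proof -
        have "measure_pmf.expectation (explore_step K p (f, U)) D
            = measure_pmf.expectation (explore_step K p (f, U)) (\<lambda>s. real (cnt (fst s) k)) - (real (cnt f k) + qk p f k)"
          unfolding D_def using stepfin[OF tr] fU
          by (subst Bochner_Integration.integral_diff) (auto intro!: integrable_measure_pmf_finite simp: algebra_simps)
        then show ?thesis using expect_step[OF k inv Une p] by simp
      qed
      have Db: "\<bar>D s\<bar> \<le> 1" if s: "s \<in> set_pmf (explore_step K p (f, U))" for s
      proof -
        have fin: "finite U" using inv by (simp add: invS_def)
        obtain v j where vj: "v \<in> U" "s = (f(v \<mapsto> j), U - {v})"
          using set_explore_step[OF fin Une, of K p f] s by auto
        have vd: "v \<notin> dom f" "finite (dom f)" using inv vj by (auto simp: invS_def)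
        have "cnt (fst s) k = cnt f k + (if j = k then 1 else 0)" using cnt_upd[OF vd] vj by simp
        then show ?thesis using qk_bounds[OF p, of f k] unfolding D_def by auto
      qed
      have "measure_pmf.expectation (map_pmf (\<lambda>s. tr @ [s]) (explore_step K p (last tr))) (\<lambda>tr. (Mk p k tr (Suc t))\<^sup>2)
          = measure_pmf.expectation (explore_step K p (f, U)) (\<lambda>s. (Mk p k tr t + D s)\<^sup>2)"
        using fU Mx by simp
      also have "\<dots> \<le> (Mk p k tr t)\<^sup>2 + 1"
        by (rule expect_sq_le[OF _ E0 Db]) (use stepfin[OF tr] fU in auto)
      finally show "measure_pmf.expectation (map_pmf (\<lambda>s. tr @ [s]) (explore_step K p (last tr))) (\<lambda>tr. (Mk p k tr (Suc t))\<^sup>2)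
        \<le> (Mk p k tr t)\<^sup>2 + 1" .
    qed
  qed
  also have "\<dots> = measure_pmf.expectation (explore_traj K p n t) (\<lambda>tr. (Mk p k tr t)\<^sup>2) + 1"
    using TP by (subst Bochner_Integration.integral_add) (auto intro: integrable_measure_pmf_finite)
  also have "\<dots> \<le> real t + 1" using Suc.IH tn by simp
  finally show ?case by simp
qed

lemma Mk_take: "t < length tr \<Longrightarrow> Mk p k (take (Suc t) tr) t = Mk p k tr t"
  unfolding Mk_def by (simp add: nth_take)

lemma Mk_sq_full:
  assumes k: "k \<in> {1..K}" and p: "0 \<le> p" "p \<le> 1" and t: "t \<le> T" "T \<le> n"
  shows "measure_pmf.expectation (explore_traj K p n T) (\<lambda>tr. (Mk p k tr t)\<^sup>2) \<le> real t"
proof -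
  have "measure_pmf.expectation (explore_traj K p n T) (\<lambda>tr. (Mk p k tr t)\<^sup>2)
      = measure_pmf.expectation (explore_traj K p n T) (\<lambda>tr. (Mk p k (take (Suc t) tr) t)\<^sup>2)"
    using traj_props[OF t(2), of K p] t
    by (intro integral_cong_AE) (auto simp: AE_measure_pmf_iff TRP_def Mk_take)
  also have "\<dots> = measure_pmf.expectation (map_pmf (take (Suc t)) (explore_traj K p n T)) (\<lambda>tr. (Mk p k tr t)\<^sup>2)"
    by simp
  also have "\<dots> = measure_pmf.expectation (explore_traj K p n t) (\<lambda>tr. (Mk p k tr t)\<^sup>2)"
    using traj_prefix[OF t] by simp
  also have "\<dots> \<le> real t" using Mk_sq[OF k p] t by simp
  finally show ?thesis .
qed

lemma pow_diff_le:
  fixes a b :: real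
  assumes "0 \<le> a" "a \<le> 1" "0 \<le> b" "b \<le> 1"
  shows "\<bar>a ^ m - b ^ m\<bar> \<le> real m * \<bar>a - b\<bar>"
proof (induction m)
  case 0 then show ?case by simp
next
  case (Suc m)
  have e: "a ^ Suc m - b ^ Suc m = a * (a ^ m - b ^ m) + b ^ m * (a - b)" by (simp add: algebra_simps)
  have "\<bar>a ^ Suc m - b ^ Suc m\<bar> \<le> \<bar>a\<bar> * \<bar>a ^ m - b ^ m\<bar> + \<bar>b ^ m\<bar> * \<bar>a - b\<bar>"
    unfolding e using abs_triangle_ineq[of "a * (a ^ m - b ^ m)" "b ^ m * (a - b)"] by (simp only: abs_mult)
  also have "\<dots> \<le> 1 * \<bar>a ^ m - b ^ m\<bar> + 1 * \<bar>a - b\<bar>"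
  proof (rule add_mono)
    show "\<bar>a\<bar> * \<bar>a ^ m - b ^ m\<bar> \<le> 1 * \<bar>a ^ m - b ^ m\<bar>"
      using assms by (intro mult_right_mono) auto
    show "\<bar>b ^ m\<bar> * \<bar>a - b\<bar> \<le> 1 * \<bar>a - b\<bar>"
      using assms by (intro mult_right_mono) (auto simp: power_le_one)
  qed
  also have "\<dots> \<le> real m * \<bar>a - b\<bar> + \<bar>a - b\<bar>" using Suc by simp
  finally show ?case by (simp add: algebra_simps)
qed

lemma exp_minus_le2:
  fixes p :: real assumes "0 \<le> p" shows "exp (- p) \<le> 1 - p + p\<^sup>2"
proof -
  have "1 + p \<le> exp p" by (rule exp_ge_add_one_self)
  then have "exp (- p) \<le> 1 / (1 + p)" using assms by (simp add: exp_minus inverse_eq_divide frac_le)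
  also have "1 / (1 + p) \<le> 1 - p + p\<^sup>2"
  proof -
    have "1 \<le> (1 - p + p\<^sup>2) * (1 + p)" using assms by (simp add: power2_eq_square algebra_simps)
    then show ?thesis using assms by (simp add: divide_le_eq)
  qed
  finally show ?thesis .
qed

lemma binom_exp:
  fixes p :: real assumes p: "0 \<le> p" "p \<le> 1"
  shows "\<bar>(1 - p) ^ m - exp (- (p * real m))\<bar> \<le> real m * p\<^sup>2"
proof -
  have e: "exp (- (p * real m)) = exp (- p) ^ m"
  proof -
    have "exp (real m * (- p)) = exp (- p) ^ m" by (rule exp_of_nat_mult)
    then show ?thesis by (simp only: mult.commute mult_minus_left)
  qed
  have b1: "exp (- p) \<le> 1" using p by simp
  have b2: "1 - p \<le> exp (- p)" using exp_ge_add_one_self[of "-p"] by simp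
  have "\<bar>(1 - p) ^ m - exp (- p) ^ m\<bar> \<le> real m * \<bar>(1 - p) - exp (- p)\<bar>"
    using p b1 by (intro pow_diff_le) auto
  also have "\<bar>(1 - p) - exp (- p)\<bar> \<le> p\<^sup>2" using b2 exp_minus_le2[OF p(1)] by simp
  finally show ?thesis unfolding e by (simp add: mult_left_mono)
qed

lemma prod_diff_le:
  fixes x y :: "'a \<Rightarrow> real"
  assumes "finite I" "\<And>i. i \<in> I \<Longrightarrow> 0 \<le> x i \<and> x i \<le> 1 \<and> 0 \<le> y i \<and> y i \<le> 1"
  shows "\<bar>prod x I - prod y I\<bar> \<le> (\<Sum>i\<in>I. \<bar>x i - y i\<bar>)"
  using assms
proof (induction I rule: finite_induct)
  case empty then show ?case by simp
next
  case (insert a I)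
  have b: "0 \<le> x a" "x a \<le> 1" "0 \<le> prod y I" "prod y I \<le> 1"
    using insert.prems by (auto intro!: prod_nonneg prod_le_1)
  have e: "prod x (insert a I) - prod y (insert a I) = x a * (prod x I - prod y I) + (x a - y a) * prod y I"
    using insert.hyps by (simp add: algebra_simps)
  have "\<bar>prod x (insert a I) - prod y (insert a I)\<bar> \<le> \<bar>x a\<bar> * \<bar>prod x I - prod y I\<bar> + \<bar>x a - y a\<bar> * \<bar>prod y I\<bar>"
    unfolding e using abs_triangle_ineq[of "x a * (prod x I - prod y I)" "(x a - y a) * prod y I"] by (simp only: abs_mult)
  also have "\<dots> \<le> 1 * \<bar>prod x I - prod y I\<bar> + \<bar>x a - y a\<bar> * 1"
  proof (rule add_mono)
    show "\<bar>x a\<bar> * \<bar>prod x I - prod y I\<bar> \<le> 1 * \<bar>prod x I - prod y I\<bar>"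
      using b by (intro mult_right_mono) auto
    show "\<bar>x a - y a\<bar> * \<bar>prod y I\<bar> \<le> \<bar>x a - y a\<bar> * 1"
      using b by (intro mult_left_mono) auto
  qed
  also have "\<dots> \<le> (\<Sum>i\<in>I. \<bar>x i - y i\<bar>) + \<bar>x a - y a\<bar>" using insert by simp
  finally show ?case using insert.hyps by (simp add: add.commute)
qed

definition PF :: "(nat \<Rightarrow> real) \<Rightarrow> nat \<Rightarrow> real" where
  "PF z k = z k * (\<Prod>r\<in>{1..<k}. 1 - z r)"

lemma PF_alt: "k \<ge> 1 \<Longrightarrow> PF z k = (\<Prod>r\<in>{1..k}. if r = k then z r else 1 - z r)"
proof -
  assume k: "k \<ge> 1"
  have "{1..k} = insert k {1..<k}" using k by auto
  then have "(\<Prod>r\<in>{1..k}. if r = k then z r else 1 - z r) = z k * (\<Prod>r\<in>{1..<k}. if r = k then z r else 1 - z r)"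
    by simp
  also have "(\<Prod>r\<in>{1..<k}. if r = k then z r else 1 - z r) = (\<Prod>r\<in>{1..<k}. 1 - z r)"
    by (rule prod.cong) auto
  finally show ?thesis unfolding PF_def by simp
qed

lemma PF_lip:
  assumes k: "k \<ge> 1" and zw: "\<And>r. r \<in> {1..k} \<Longrightarrow> 0 \<le> z r \<and> z r \<le> 1 \<and> 0 \<le> w r \<and> w r \<le> 1"
  shows "\<bar>PF z k - PF w k\<bar> \<le> (\<Sum>r\<in>{1..k}. \<bar>z r - w r\<bar>)"
proof -
  have "\<bar>PF z k - PF w k\<bar> \<le> (\<Sum>r\<in>{1..k}. \<bar>(if r = k then z r else 1 - z r) - (if r = k then w r else 1 - w r)\<bar>)"
    unfolding PF_alt[OF k] by (rule prod_diff_le) (use zw in auto)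
  also have "\<dots> = (\<Sum>r\<in>{1..k}. \<bar>z r - w r\<bar>)" by (intro sum.cong) auto
  finally show ?thesis .
qed

lemma qk_PF: "qk p f k = PF (\<lambda>r. (1 - p) ^ cnt f r) k" unfolding qk_def PF_def ..
lemma dlt_PF: "dlt c x k = PF (\<lambda>r. exp (- c * x r)) k" unfolding dlt_def PF_def ..

lemma qk_dlt:
  assumes c: "c > 0" and n: "n > 0" "c / real n \<le> 1" and k: "k \<ge> 1" and m: "\<And>r. cnt f r \<le> n"
  shows "\<bar>qk (c / real n) f k - dlt c (\<lambda>r. real (cnt f r) / real n) k\<bar> \<le> real k * c\<^sup>2 / real n"
proof -
  let ?p = "c / real n"
  have p: "0 \<le> ?p" "?p \<le> 1" using c n by auto
  have "\<bar>qk ?p f k - dlt c (\<lambda>r. real (cnt f r) / real n) k\<bar> \<le> (\<Sum>r\<in>{1..k}. \<bar>(1 - ?p) ^ cnt f r - exp (- c * (real (cnt f r) / real n))\<bar>)"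
    unfolding qk_PF dlt_PF
    by (rule PF_lip[OF k]) (use p c in \<open>auto intro!: power_le_one divide_nonneg_nonneg\<close>)
  also have "\<dots> \<le> (\<Sum>r\<in>{1..k}. c\<^sup>2 / real n)"
  proof (rule sum_mono)
    fix r assume "r \<in> {1..k}"
    have e: "c * (real (cnt f r) / real n) = ?p * real (cnt f r)" by simp
    have "\<bar>(1 - ?p) ^ cnt f r - exp (- c * (real (cnt f r) / real n))\<bar> \<le> real (cnt f r) * ?p\<^sup>2"
      using binom_exp[OF p, of "cnt f r"] e by simp
    also have "\<dots> \<le> real n * ?p\<^sup>2" using m[of r] by (intro mult_right_mono) auto
    also have "\<dots> = c\<^sup>2 / real n" using n by (simp add: power2_eq_square)
    finally show "\<bar>(1 - ?p) ^ cnt f r - exp (- c * (real (cnt f r) / real n))\<bar> \<le> c\<^sup>2 / real n" .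
  qed
  also have "\<dots> = real k * c\<^sup>2 / real n" by simp
  finally show ?thesis .
qed

lemma exp_lip:
  fixes x y c :: real assumes "c > 0" "0 \<le> x" "0 \<le> y"
  shows "\<bar>exp (- c * x) - exp (- c * y)\<bar> \<le> c * \<bar>x - y\<bar>"
proof -
  have *: "exp (- c * a) - exp (- c * b) \<le> c * (b - a)" if "0 \<le> a" "a \<le> b" for a b :: real
  proof -
    have "exp (- c * a) - exp (- c * b) = exp (- c * a) * (1 - exp (- (c * (b - a))))"
      by (simp add: algebra_simps exp_add[symmetric])
    also have "\<dots> \<le> 1 * (c * (b - a))"
    proof (rule mult_mono)
      show "exp (- c * a) \<le> 1" using assms that by simp
      show "1 - exp (- (c * (b - a))) \<le> c * (b - a)" using exp_ge_add_one_self[of "- (c * (b - a))"] by simp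
      show "0 \<le> 1 - exp (- (c * (b - a)))" using assms that by simp
    qed simp
    finally show ?thesis by simp
  qed
  have "exp (- c * y) \<le> exp (- c * x)" if "x \<le> y" using that assms by simp
  moreover have "exp (- c * x) \<le> exp (- c * y)" if "y \<le> x" using that assms by simp
  ultimately show ?thesis using *[of x y] *[of y x] assms by (cases "x \<le> y") auto
qed

lemma dlt_lip:
  assumes c: "c > 0" and k: "k \<ge> 1" and xy: "\<And>r. r \<in> {1..k} \<Longrightarrow> 0 \<le> x r \<and> 0 \<le> y r"
  shows "\<bar>dlt c x k - dlt c y k\<bar> \<le> c * (\<Sum>r\<in>{1..k}. \<bar>x r - y r\<bar>)"
proof -
  have "\<bar>dlt c x k - dlt c y k\<bar> \<le> (\<Sum>r\<in>{1..k}. \<bar>exp (- c * x r) - exp (- c * y r)\<bar>)"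
    unfolding dlt_PF by (rule PF_lip[OF k]) (use xy c in auto)
  also have "\<dots> \<le> (\<Sum>r\<in>{1..k}. c * \<bar>x r - y r\<bar>)"
    by (rule sum_mono) (use exp_lip c xy in auto)
  finally show ?thesis by (simp add: sum_distrib_left)
qed

lemma al_mvt:
  assumes c: "c > 0" and s: "s \<in> {0..1}" and t: "t \<in> {0..1}" and st: "s < t"
  shows "\<exists>x\<in>{s..t}. al c t k - al c s k = dlt c (al c x) k * (t - s)"
proof -
  have cont: "continuous_on {s..t} (\<lambda>u. al c u k)"
    using al_deriv[OF c] s t
    by (intro DERIV_continuous_on[where D="\<lambda>x. dlt c (al c x) k"]) (auto intro: DERIV_subset[where s="{0..1}"])
  have dd: "((\<lambda>u. al c u k) has_real_derivative dlt c (al c x) k) (at x)" if x: "s < x" "x < t" for x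
  proof -
    have x1: "x \<in> {0..1}" using x s t by auto
    have "((\<lambda>u. al c u k) has_real_derivative dlt c (al c x) k) (at x within {0..1})"
      using al_deriv[OF c x1] .
    moreover have "at x within {0..1} = at x"
      using x s t by (intro at_within_interior) (auto simp: interior_atLeastAtMost_real)
    ultimately show ?thesis by simp
  qed
  have dif: "\<And>x. s < x \<Longrightarrow> x < t \<Longrightarrow> (\<lambda>u. al c u k) differentiable (at x)"
    using dd real_differentiable_def by blast
  from MVT[OF st cont dif] obtain l z where z: "s < z" "z < t"
    "((\<lambda>u. al c u k) has_real_derivative l) (at z)" "al c t k - al c s k = (t - s) * l"
    by blast
  have "l = dlt c (al c z) k"
    using DERIV_unique[OF z(3) dd[OF z(1,2)]] .
  then show ?thesis using z by (auto simp: mult.commute)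
qed

lemma al_step:
  assumes c: "c > 0" and n: "n > 0" and s: "s < n" and k: "k \<ge> 1"
  shows "\<bar>dlt c (al c (real s / real n)) k - real n * (al c (real (Suc s) / real n) k - al c (real s / real n) k)\<bar>
         \<le> c * real k / real n"
proof -
  let ?a = "real s / real n" and ?b = "real (Suc s) / real n"
  have a: "?a \<in> {0..1}" and b: "?b \<in> {0..1}" and ab: "?a < ?b" using n s by (auto simp: divide_simps)
  obtain x where x: "x \<in> {?a..?b}" "al c ?b k - al c ?a k = dlt c (al c x) k * (?b - ?a)"
    using al_mvt[OF c a b ab] by blast
  have a0: "0 \<le> ?a" by simp
  have x1: "x \<in> {0..1}" using x b order_trans[OF a0] by auto
  have ba: "?b - ?a = 1 / real n" using n by (simp add: divide_simps)
  have e: "real n * (al c ?b k - al c ?a k) = dlt c (al c x) k" using x(2) ba n by simp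
  have "\<bar>dlt c (al c ?a) k - dlt c (al c x) k\<bar> \<le> c * (\<Sum>r\<in>{1..k}. \<bar>al c ?a r - al c x r\<bar>)"
    by (rule dlt_lip[OF c k]) (use al_bounds[OF c a] al_bounds[OF c x1] in auto)
  also have "\<dots> \<le> c * (\<Sum>r\<in>{1..k}. 1 / real n)"
  proof (intro mult_left_mono sum_mono)
    fix r assume "r \<in> {1..k}"
    have "0 \<le> al c x r - al c ?a r" "al c x r - al c ?a r \<le> x - ?a"
      using al_lip[OF c a x1] x by auto
    moreover have "x - ?a \<le> 1 / real n" using x ba by auto
    ultimately show "\<bar>al c ?a r - al c x r\<bar> \<le> 1 / real n" by auto
  qed (use c in auto)
  also have "\<dots> = c * real k / real n" by simp
  finally show ?thesis using e by simp
qed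

definition Dv :: "real \<Rightarrow> nat \<Rightarrow> nat \<Rightarrow> sfap_state list \<Rightarrow> nat \<Rightarrow> real" where
  "Dv c n K tr t = (\<Sum>k\<in>{1..K}. \<bar>real (cnt (fst (tr ! t)) k) - real n * al c (real t / real n) k\<bar>)"

lemma cnt_le_n: "invS n K (f, U) \<Longrightarrow> cnt f r \<le> n"
proof -
  assume "invS n K (f, U)"
  then have "{u. f u = Some r} \<subseteq> {1..n}" unfolding invS_def by auto
  then have "card {u. f u = Some r} \<le> card {1..n}" by (intro card_mono) auto
  then show ?thesis by (simp add: cnt_def)
qed

lemma cnt_le_n': "TRP n K T tr \<Longrightarrow> s \<le> T \<Longrightarrow> cnt (fst (tr ! s)) r \<le> n"
  unfolding TRP_def using cnt_le_n by (metis prod.collapse)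

lemma det_ineq_k:
  assumes c: "c > 0" and n: "n > 0" and pn: "c / real n \<le> 1" and K: "k \<in> {1..K}"
    and tr: "TRP n K n tr" and t: "t \<le> n"
  shows "\<bar>real (cnt (fst (tr ! t)) k) - real n * al c (real t / real n) k\<bar>
     \<le> \<bar>Mk (c / real n) k tr t\<bar> + (real K * c\<^sup>2 + c * real K) + c / real n * (\<Sum>s<t. Dv c n K tr s)"
proof -
  let ?p = "c / real n"
  define f where "f i = al c (real i / real n) k" for i
  define trm where "trm s = qk ?p (fst (tr ! s)) k - real n * (f (Suc s) - f s)" for s
  have k1: "k \<ge> 1" "k \<le> K" using K by auto
  have tel: "(\<Sum>s<t. f (Suc s) - f s) = f t" using sum_lessThan_telescope[of f t] by (simp add: f_def al_0)
  have st: "(\<Sum>s<t. trm s) = (\<Sum>s<t. qk ?p (fst (tr ! s)) k) - real n * f t"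
  proof -
    have "(\<Sum>s<t. trm s) = (\<Sum>s<t. qk ?p (fst (tr ! s)) k) - (\<Sum>s<t. real n * (f (Suc s) - f s))"
      unfolding trm_def by (rule sum_subtractf)
    also have "(\<Sum>s<t. real n * (f (Suc s) - f s)) = real n * f t"
      by (simp only: sum_distrib_left[symmetric] tel)
    finally show ?thesis .
  qed
  have dec: "real (cnt (fst (tr ! t)) k) - real n * al c (real t / real n) k = Mk ?p k tr t + (\<Sum>s<t. trm s)"
    unfolding st Mk_def f_def by simp
  have tb: "\<bar>trm s\<bar> \<le> (real K * c\<^sup>2 + c * real K) / real n + c / real n * Dv c n K tr s" if s: "s < t" for s
  proof -
    define x where "x r = real (cnt (fst (tr ! s)) r) / real n" for r
    have sn: "s \<le> n" "s < n" using s t by auto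
    have mle: "\<And>r. cnt (fst (tr ! s)) r \<le> n" using cnt_le_n'[OF tr sn(1)] .
    have sa: "real s / real n \<in> {0..1}" using sn n by auto
    have e1: "\<bar>qk ?p (fst (tr ! s)) k - dlt c x k\<bar> \<le> real k * c\<^sup>2 / real n"
      unfolding x_def by (rule qk_dlt[OF c n pn k1(1) mle])
    have e2: "\<bar>dlt c x k - dlt c (al c (real s / real n)) k\<bar> \<le> c * (\<Sum>r\<in>{1..k}. \<bar>x r - al c (real s / real n) r\<bar>)"
      by (rule dlt_lip[OF c k1(1)]) (use al_bounds[OF c sa] in \<open>auto simp: x_def\<close>)
    have e3: "\<bar>dlt c (al c (real s / real n)) k - real n * (f (Suc s) - f s)\<bar> \<le> c * real k / real n"
      unfolding f_def by (rule al_step[OF c n sn(2) k1(1)])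
    have "(\<Sum>r\<in>{1..k}. \<bar>x r - al c (real s / real n) r\<bar>) \<le> (\<Sum>r\<in>{1..K}. \<bar>x r - al c (real s / real n) r\<bar>)"
      using k1 by (intro sum_mono2) auto
    also have "\<dots> = Dv c n K tr s / real n"
    proof -
      have "\<bar>x r - al c (real s / real n) r\<bar> = \<bar>real (cnt (fst (tr ! s)) r) - real n * al c (real s / real n) r\<bar> / real n" for r
      proof -
        have "x r - al c (real s / real n) r = (real (cnt (fst (tr ! s)) r) - real n * al c (real s / real n) r) / real n"
          using n unfolding x_def by (simp add: field_simps)
        then show ?thesis by simp
      qed
      then show ?thesis unfolding Dv_def by (simp add: sum_divide_distrib)
    qed
    finally have e2': "c * (\<Sum>r\<in>{1..k}. \<bar>x r - al c (real s / real n) r\<bar>) \<le> c / real n * Dv c n K tr s"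
      using c mult_left_mono[of _ "Dv c n K tr s / real n" c] by (simp add: less_imp_le)
    have "\<bar>trm s\<bar> \<le> \<bar>qk ?p (fst (tr ! s)) k - dlt c x k\<bar> + \<bar>dlt c x k - dlt c (al c (real s / real n)) k\<bar>
          + \<bar>dlt c (al c (real s / real n)) k - real n * (f (Suc s) - f s)\<bar>"
      unfolding trm_def[of s] by (smt (verit))
    also have "\<dots> \<le> real k * c\<^sup>2 / real n + c / real n * Dv c n K tr s + c * real k / real n"
      using e1 e2 e2' e3 by linarith
    also have "\<dots> \<le> (real K * c\<^sup>2 + c * real K) / real n + c / real n * Dv c n K tr s"
    proof -
      have "real k * c\<^sup>2 \<le> real K * c\<^sup>2" using k1 by (intro mult_right_mono) auto
      moreover have "c * real k \<le> c * real K" using k1 c by (intro mult_left_mono) auto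
      ultimately have "real k * c\<^sup>2 / real n + c * real k / real n \<le> (real K * c\<^sup>2 + c * real K) / real n"
        using n by (simp add: add_divide_distrib[symmetric] divide_right_mono)
      then show ?thesis by linarith
    qed
    finally show ?thesis .
  qed
  have "\<bar>real (cnt (fst (tr ! t)) k) - real n * al c (real t / real n) k\<bar> \<le> \<bar>Mk ?p k tr t\<bar> + \<bar>\<Sum>s<t. trm s\<bar>"
    unfolding dec by (rule abs_triangle_ineq)
  also have "\<bar>\<Sum>s<t. trm s\<bar> \<le> (\<Sum>s<t. \<bar>trm s\<bar>)" by (rule sum_abs)
  also have "\<dots> \<le> (\<Sum>s<t. (real K * c\<^sup>2 + c * real K) / real n + c / real n * Dv c n K tr s)"
    by (rule sum_mono) (use tb in auto)
  also have "\<dots> = real t * ((real K * c\<^sup>2 + c * real K) / real n) + c / real n * (\<Sum>s<t. Dv c n K tr s)"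
    by (simp add: sum.distrib sum_distrib_left)
  also have "real t * ((real K * c\<^sup>2 + c * real K) / real n) \<le> (real K * c\<^sup>2 + c * real K)"
  proof -
    have "real t / real n \<le> 1" using t n by simp
    moreover have "0 \<le> real K * c\<^sup>2 + c * real K" using c by simp
    ultimately have "real t / real n * (real K * c\<^sup>2 + c * real K) \<le> 1 * (real K * c\<^sup>2 + c * real K)"
      by (intro mult_right_mono) auto
    then show ?thesis by simp
  qed
  finally show ?thesis by linarith
qed

lemma det_ineq:
  assumes c: "c > 0" and n: "n > 0" and pn: "c / real n \<le> 1"
    and tr: "TRP n K n tr" and t: "t \<le> n"
  shows "Dv c n K tr t \<le> (\<Sum>k\<in>{1..K}. \<bar>Mk (c / real n) k tr t\<bar>) + real K * (real K * c\<^sup>2 + c * real K)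
      + c * real K / real n * (\<Sum>s<t. Dv c n K tr s)"
proof -
  have "Dv c n K tr t \<le> (\<Sum>k\<in>{1..K}. \<bar>Mk (c / real n) k tr t\<bar> + (real K * c\<^sup>2 + c * real K) + c / real n * (\<Sum>s<t. Dv c n K tr s))"
    unfolding Dv_def[of c n K tr t] by (rule sum_mono) (rule det_ineq_k[OF c n pn _ tr t], simp)
  also have "\<dots> = (\<Sum>k\<in>{1..K}. \<bar>Mk (c / real n) k tr t\<bar>) + real K * (real K * c\<^sup>2 + c * real K)
      + c * real K / real n * (\<Sum>s<t. Dv c n K tr s)"
    by (simp add: sum.distrib algebra_simps)
  finally show ?thesis .
qed

lemma gronwall_disc:
  fixes e :: "nat \<Rightarrow> real"
  assumes a: "a \<ge> 0" and h: "\<And>t. t \<le> N \<Longrightarrow> e t \<le> B + a * (\<Sum>s<t. e s)"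
  shows "t \<le> N \<Longrightarrow> e t \<le> B * (1 + a) ^ t"
proof (induction t rule: less_induct)
  case (less t)
  have geo: "(\<Sum>s<t. a * (1 + a) ^ s) = (1 + a) ^ t - 1" for t
    by (induction t) (auto simp: algebra_simps)
  have "e t \<le> B + a * (\<Sum>s<t. e s)" using h less.prems by simp
  also have "a * (\<Sum>s<t. e s) \<le> a * (\<Sum>s<t. B * (1 + a) ^ s)"
    using less a by (intro mult_left_mono sum_mono) auto
  also have "a * (\<Sum>s<t. B * (1 + a) ^ s) = B * ((1 + a) ^ t - 1)"
  proof -
    have "a * (\<Sum>s<t. B * (1 + a) ^ s) = B * (\<Sum>s<t. a * (1 + a) ^ s)"
      by (simp add: sum_distrib_left algebra_simps)
    then show ?thesis using geo[of t] by simp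
  qed
  finally show ?case by (simp add: algebra_simps)
qed

lemma abs_le_amgm:
  fixes M :: real assumes n: "n > 0"
  shows "\<bar>M\<bar> \<le> (M\<^sup>2 / sqrt n + sqrt n) / 2"
proof -
  have s: "sqrt n > 0" using n by simp
  have "0 \<le> (\<bar>M\<bar> - sqrt n)\<^sup>2" by simp
  then have "2 * \<bar>M\<bar> * sqrt n \<le> M\<^sup>2 + (sqrt n)\<^sup>2" by (simp add: power2_eq_square algebra_simps)
  then have "2 * \<bar>M\<bar> * sqrt n \<le> M\<^sup>2 + n" using n by simp
  then show ?thesis using s by (simp add: field_simps)
qed

lemma E_abs_Mk:
  assumes k: "k \<in> {1..K}" and p: "0 \<le> p" "p \<le> 1" and t: "t \<le> n" and n: "n > 0"
  shows "measure_pmf.expectation (explore_traj K p n n) (\<lambda>tr. \<bar>Mk p k tr t\<bar>) \<le> sqrt (real n)"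
proof -
  let ?M = "explore_traj K p n n"
  have I: "integrable ?M h" for h :: "_ \<Rightarrow> real"
    using traj_props[of n n K p] by (auto intro: integrable_measure_pmf_finite)
  have nn: "real n > 0" using n by simp
  have "measure_pmf.expectation ?M (\<lambda>tr. \<bar>Mk p k tr t\<bar>) \<le> measure_pmf.expectation ?M (\<lambda>tr. ((Mk p k tr t)\<^sup>2 / sqrt n + sqrt n) / 2)"
    by (rule integral_mono[OF I I]) (rule abs_le_amgm[OF nn])
  also have "\<dots> = (measure_pmf.expectation ?M (\<lambda>tr. (Mk p k tr t)\<^sup>2) / sqrt n + sqrt n) / 2"
    using I by simp
  also have "\<dots> \<le> (real n / sqrt n + sqrt n) / 2"
  proof -
    have "measure_pmf.expectation ?M (\<lambda>tr. (Mk p k tr t)\<^sup>2) \<le> real n"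
      using Mk_sq_full[OF k p t order_refl] t by simp
    then have "measure_pmf.expectation ?M (\<lambda>tr. (Mk p k tr t)\<^sup>2) / sqrt n \<le> real n / sqrt n"
      using nn by (simp add: divide_right_mono)
    from divide_right_mono[OF add_right_mono[OF this, of "sqrt (real n)"], of 2] show ?thesis by simp
  qed
  also have "real n / sqrt n = sqrt n" using nn by (simp add: real_div_sqrt)
  finally show ?thesis by simp
qed

definition Cst :: "real \<Rightarrow> nat \<Rightarrow> real" where
  "Cst c K = real K * (real K * c\<^sup>2 + c * real K)"

lemma E_Dv_bound:
  assumes c: "c > 0" and n: "n > 0" and pn: "c / real n \<le> 1" and t: "t \<le> n"
  shows "measure_pmf.expectation (explore_traj K (c / real n) n n) (\<lambda>tr. Dv c n K tr t)
     \<le> (real K * sqrt (real n) + Cst c K) * exp (c * real K)"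
proof -
  let ?p = "c / real n"
  let ?M = "explore_traj K ?p n n"
  let ?e = "\<lambda>t. measure_pmf.expectation ?M (\<lambda>tr. Dv c n K tr t)"
  let ?a = "c * real K / real n"
  let ?B = "real K * sqrt (real n) + Cst c K"
  have p: "0 \<le> ?p" "?p \<le> 1" using c pn by auto
  have I: "integrable ?M h" for h :: "_ \<Rightarrow> real"
    using traj_props[of n n K ?p] by (auto intro: integrable_measure_pmf_finite)
  have rec: "?e t \<le> ?B + ?a * (\<Sum>s<t. ?e s)" if t: "t \<le> n" for t
  proof -
    have "?e t \<le> measure_pmf.expectation ?M (\<lambda>tr. (\<Sum>k\<in>{1..K}. \<bar>Mk ?p k tr t\<bar>) + Cst c K + ?a * (\<Sum>s<t. Dv c n K tr s))"
    proof (rule integral_mono_AE[OF I I])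
      show "AE tr in measure_pmf ?M. Dv c n K tr t \<le> (\<Sum>k\<in>{1..K}. \<bar>Mk ?p k tr t\<bar>) + Cst c K + ?a * (\<Sum>s<t. Dv c n K tr s)"
        unfolding AE_measure_pmf_iff Cst_def
        using traj_props[of n n K ?p] det_ineq[OF c n pn _ t] by auto
    qed
    also have "\<dots> = (\<Sum>k\<in>{1..K}. measure_pmf.expectation ?M (\<lambda>tr. \<bar>Mk ?p k tr t\<bar>)) + Cst c K + ?a * (\<Sum>s<t. ?e s)"
      using I by (simp add: Bochner_Integration.integral_sum)
    also have "(\<Sum>k\<in>{1..K}. measure_pmf.expectation ?M (\<lambda>tr. \<bar>Mk ?p k tr t\<bar>)) \<le> (\<Sum>k\<in>{1..K}. sqrt (real n))"
      by (rule sum_mono) (rule E_abs_Mk[OF _ p t n], simp)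
    finally show ?thesis by simp
  qed
  have a0: "?a \<ge> 0" using c by simp
  have "?e t \<le> ?B * (1 + ?a) ^ t"
    by (rule gronwall_disc[OF a0 rec t]) auto
  also have "\<dots> \<le> ?B * exp (c * real K)"
  proof (rule mult_left_mono)
    have "(1 + ?a) ^ t \<le> exp ?a ^ t"
      using a0 by (intro power_mono) (auto simp: exp_ge_add_one_self)
    also have "\<dots> = exp (real t * ?a)" by (rule exp_of_nat_mult[symmetric])
    also have "\<dots> \<le> exp (c * real K)"
    proof -
      have "real t * ?a = (real t / real n) * (c * real K)" by simp
      also have "\<dots> \<le> 1 * (c * real K)"
        using t n c by (intro mult_right_mono) auto
      finally show ?thesis by simp
    qed
    finally show "(1 + ?a) ^ t \<le> exp (c * real K)" .
    show "0 \<le> ?B" using c by (simp add: Cst_def)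
  qed
  finally show ?thesis .
qed

lemma bound_tendsto:
  fixes K C E eta :: real assumes "eta > 0"
  shows "(\<lambda>n::nat. (K * sqrt (real n) + C) * E / (real n * eta - 1)) \<longlonglongrightarrow> 0"
  using assms by real_asymp

lemma alpha_n_eq: "alpha_n n tr k t = real (cnt (fst (tr ! nat \<lfloor>real n * t\<rfloor>)) k) / real n"
  unfolding alpha_n_def A_count_def cnt_def ..

lemma floor_facts:
  assumes n: "n > 0" and t: "t \<in> {0..1}"
  defines "m \<equiv> nat \<lfloor>real n * t\<rfloor>"
  shows "m \<le> n" "real m / real n \<le> t" "t - real m / real n \<le> 1 / real n" "real m / real n \<in> {0..1}"
proof -
  have nt: "0 \<le> real n * t" "real n * t \<le> real n" using t by (auto intro: mult_left_le)
  have fl: "real m \<le> real n * t" "real n * t < real m + 1"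
    unfolding m_def using nt by (auto simp: of_nat_nat)
  have mn: "real m \<le> real n" using fl nt by linarith
  then show "m \<le> n" by simp
  show "real m / real n \<le> t" using fl n by (simp add: divide_le_eq mult.commute)
  have "real n * t - real m \<le> 1" using fl by linarith
  then have "(real n * t - real m) / real n \<le> 1 / real n" using n by (simp add: divide_right_mono)
  moreover have "(real n * t - real m) / real n = t - real m / real n" using n by (simp add: field_simps)
  ultimately show "t - real m / real n \<le> 1 / real n" by simp
  show "real m / real n \<in> {0..1}" using mn n by (auto simp: divide_le_eq)
qed

lemma pt_conv:
  assumes c: "c > 0" and t: "t \<in> {0..1}" and k: "k \<in> {1..K}" and eta: "eta > 0"
  shows "(\<lambda>n. measure_pmf.prob (explore_traj K (c / real n) n n)
            {tr. \<bar>alpha_n n tr k t - al c t k\<bar> > eta}) \<longlonglongrightarrow> 0"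
proof (rule tendsto_sandwich[OF _ _ tendsto_const bound_tendsto[OF eta]])
  show "\<forall>\<^sub>F n in sequentially. 0 \<le> measure_pmf.prob (explore_traj K (c / real n) n n)
            {tr. \<bar>alpha_n n tr k t - al c t k\<bar> > eta}" by simp
  have ev: "\<forall>\<^sub>F n in sequentially. n > 0 \<and> c / real n \<le> 1 \<and> real n * eta > 1"
  proof -
    obtain N1 :: nat where N1: "real N1 > c" using reals_Archimedean2 by blast
    obtain N2 :: nat where N2: "real N2 > 1 / eta" using reals_Archimedean2 by blast
    show ?thesis
    proof (rule eventually_sequentiallyI[of "Suc (max N1 N2)"])
      fix n assume n: "Suc (max N1 N2) \<le> n"
      then have "real n > c" "real n > 1 / eta" using N1 N2 by linarith+
      moreover have "n > 0" using n by simp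
      ultimately show "n > 0 \<and> c / real n \<le> 1 \<and> real n * eta > 1"
        using c eta by (auto simp: divide_le_eq field_simps)
    qed
  qed
  show "\<forall>\<^sub>F n in sequentially. measure_pmf.prob (explore_traj K (c / real n) n n)
            {tr. \<bar>alpha_n n tr k t - al c t k\<bar> > eta}
        \<le> (real K * sqrt (real n) + Cst c K) * exp (c * real K) / (real n * eta - 1)"
    using ev
  proof eventually_elim
    case (elim n)
    then have n: "n > 0" and pn: "c / real n \<le> 1" and ne: "real n * eta > 1" by auto
    let ?M = "explore_traj K (c / real n) n n"
    define m where "m = nat \<lfloor>real n * t\<rfloor>"
    note ff = floor_facts[OF n t, folded m_def]
    have incl: "{tr. \<bar>alpha_n n tr k t - al c t k\<bar> > eta} \<inter> set_pmf ?M \<subseteq> {tr. real n * eta - 1 \<le> Dv c n K tr m}"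
    proof safe
      fix tr assume ev: "\<bar>alpha_n n tr k t - al c t k\<bar> > eta" and tr: "tr \<in> set_pmf ?M"
      have one: "\<bar>real (cnt (fst (tr ! m)) k) - real n * al c (real m / real n) k\<bar> \<le> Dv c n K tr m"
        unfolding Dv_def using k by (intro member_le_sum) auto
      have a1: "\<bar>alpha_n n tr k t - al c (real m / real n) k\<bar> \<le> Dv c n K tr m / real n"
      proof -
        have "alpha_n n tr k t - al c (real m / real n) k = (real (cnt (fst (tr ! m)) k) - real n * al c (real m / real n) k) / real n"
          unfolding alpha_n_eq m_def[symmetric] using n by (simp add: field_simps)
        then show ?thesis using one n by (simp add: divide_right_mono)
      qed
      have a2: "\<bar>al c (real m / real n) k - al c t k\<bar> \<le> 1 / real n"
        using al_lip[OF c ff(4) t ff(2), of k] ff(3) by auto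
      have "eta < Dv c n K tr m / real n + 1 / real n" using ev a1 a2 by linarith
      then have "eta * real n < Dv c n K tr m + 1" using n by (simp add: field_simps)
      then show "real n * eta - 1 \<le> Dv c n K tr m" by (simp add: mult.commute)
    qed
    have "measure_pmf.prob ?M {tr. \<bar>alpha_n n tr k t - al c t k\<bar> > eta}
        = measure_pmf.prob ?M ({tr. \<bar>alpha_n n tr k t - al c t k\<bar> > eta} \<inter> set_pmf ?M)"
      by (simp add: measure_Int_set_pmf)
    also have "\<dots> \<le> measure_pmf.prob ?M {tr. real n * eta - 1 \<le> Dv c n K tr m}"
      by (rule measure_pmf.finite_measure_mono[OF incl]) simp
    also have "\<dots> \<le> measure_pmf.expectation ?M (\<lambda>tr. Dv c n K tr m) / (real n * eta - 1)"
    proof -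
      have "measure ?M {tr \<in> space ?M. real n * eta - 1 \<le> Dv c n K tr m} \<le> measure_pmf.expectation ?M (\<lambda>tr. Dv c n K tr m) / (real n * eta - 1)"
        by (rule integral_Markov_inequality_measure)
           (use traj_props[of n n K "c / real n"] ne in \<open>auto intro: integrable_measure_pmf_finite simp: Dv_def\<close>)
      then show ?thesis by simp
    qed
    also have "\<dots> \<le> (real K * sqrt (real n) + Cst c K) * exp (c * real K) / (real n * eta - 1)"
      using E_Dv_bound[OF c n pn ff(1)] ne by (simp add: divide_right_mono)
    finally show ?case .
  qed
qed

lemma cnt_mono_traj:
  assumes tr: "TRP n K T tr" and ij: "i \<le> j" "j \<le> T"
  shows "cnt (fst (tr ! i)) k \<le> cnt (fst (tr ! j)) k"
  using ij
proof (induction j)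
  case 0 then show ?case by simp
next
  case (Suc j)
  show ?case
  proof (cases "i = Suc j")
    case True then show ?thesis by simp
  next
    case False
    then have ij': "i \<le> j" "j < T" using Suc.prems by auto
    obtain f U where fU: "tr ! j = (f, U)" by fastforce
    obtain v jj where vj: "v \<in> U" "tr ! Suc j = (f(v \<mapsto> jj), U - {v})"
      using tr ij'(2) fU unfolding TRP_def by fastforce
    have inv: "invS n K (f, U)" using tr ij'(2) fU unfolding TRP_def by (metis less_imp_le)
    have vd: "v \<notin> dom f" "finite (dom f)" using inv vj by (auto simp: invS_def)
    have "cnt (fst (tr ! i)) k \<le> cnt f k" using Suc.IH ij' fU by simp
    also have "\<dots> \<le> cnt (fst (tr ! Suc j)) k" using cnt_upd[OF vd, of jj k] vj by simp
    finally show ?thesis .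
  qed
qed

lemma alpha_n_mono:
  assumes tr: "TRP n K n tr" and n: "n > 0" and st: "s \<le> t" and s: "s \<in> {0..1}" and t: "t \<in> {0..1}"
  shows "alpha_n n tr k s \<le> alpha_n n tr k t"
proof -
  have "nat \<lfloor>real n * s\<rfloor> \<le> nat \<lfloor>real n * t\<rfloor>" using st by (intro nat_mono floor_mono mult_left_mono) auto
  moreover have "nat \<lfloor>real n * t\<rfloor> \<le> n" using floor_facts(1)[OF n t] .
  ultimately have "cnt (fst (tr ! nat \<lfloor>real n * s\<rfloor>)) k \<le> cnt (fst (tr ! nat \<lfloor>real n * t\<rfloor>)) k"
    by (intro cnt_mono_traj[OF tr]) auto
  then show ?thesis unfolding alpha_n_eq by (simp add: divide_right_mono)
qed

lemma unif_conv:
  assumes c: "c > 0" and eps: "eps > 0"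
  shows "(\<lambda>n. measure_pmf.prob (explore_traj K (c / real n) n n)
            {tr. \<exists>t\<in>{0..1}. \<exists>k\<in>{1..K}. \<bar>alpha_n n tr k t - al c t k\<bar> > eps}) \<longlonglongrightarrow> 0"
proof -
  obtain L :: nat where L: "real L > 2 / eps" using reals_Archimedean2 by blast
  have L1: "L \<ge> 1" using L eps by (cases L) (auto simp: divide_less_0_iff)
  have Leps: "1 / real L < eps / 2" using L eps L1 by (simp add: field_simps)
  define G where "G = {0..L} \<times> {1..K}"
  define A where "A n = (\<lambda>(j, k). {tr. \<bar>alpha_n n tr k (real j / real L) - al c (real j / real L) k\<bar> > eps / 2})" for n
  have fin: "finite G" unfolding G_def by simp
  have lim: "(\<lambda>n. \<Sum>g\<in>G. measure_pmf.prob (explore_traj K (c / real n) n n) (A n g)) \<longlonglongrightarrow> 0"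
  proof (rule tendsto_null_sum)
    fix g assume g: "g \<in> G"
    obtain j k where jk: "g = (j, k)" by fastforce
    have j: "real j / real L \<in> {0..1}" and k: "k \<in> {1..K}" using g jk L1 unfolding G_def by auto
    show "(\<lambda>n. measure_pmf.prob (explore_traj K (c / real n) n n) (A n g)) \<longlonglongrightarrow> 0"
      unfolding jk A_def using pt_conv[OF c j k, of "eps / 2"] eps by simp
  qed
  show ?thesis
  proof (rule tendsto_sandwich[OF _ _ tendsto_const lim])
    show "\<forall>\<^sub>F n in sequentially. 0 \<le> measure_pmf.prob (explore_traj K (c / real n) n n)
            {tr. \<exists>t\<in>{0..1}. \<exists>k\<in>{1..K}. \<bar>alpha_n n tr k t - al c t k\<bar> > eps}" by simp
    show "\<forall>\<^sub>F n in sequentially. measure_pmf.prob (explore_traj K (c / real n) n n)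
            {tr. \<exists>t\<in>{0..1}. \<exists>k\<in>{1..K}. \<bar>alpha_n n tr k t - al c t k\<bar> > eps}
          \<le> (\<Sum>g\<in>G. measure_pmf.prob (explore_traj K (c / real n) n n) (A n g))"
    proof (rule eventually_sequentiallyI[of 1])
      fix n :: nat assume n1: "1 \<le> n"
      then have n: "n > 0" by simp
      let ?M = "explore_traj K (c / real n) n n"
      have incl: "{tr. \<exists>t\<in>{0..1}. \<exists>k\<in>{1..K}. \<bar>alpha_n n tr k t - al c t k\<bar> > eps} \<inter> set_pmf ?M \<subseteq> (\<Union>g\<in>G. A n g)"
      proof safe
        fix tr t k assume tr: "tr \<in> set_pmf ?M" and t: "t \<in> {0..1}" and k: "k \<in> {1..K}"
          and bad: "\<bar>alpha_n n tr k t - al c t k\<bar> > eps"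
        have T: "TRP n K n tr" using traj_props[of n n K "c / real n"] tr by auto
        show "tr \<in> (\<Union>g\<in>G. A n g)"
        proof (rule ccontr)
          assume "tr \<notin> (\<Union>g\<in>G. A n g)"
          then have good: "\<bar>alpha_n n tr k (real j / real L) - al c (real j / real L) k\<bar> \<le> eps / 2" if "j \<le> L" for j
            using that k unfolding G_def A_def by fastforce
          define j where "j = min (nat \<lfloor>real L * t\<rfloor>) (L - 1)"
          have jL: "j + 1 \<le> L" using L1 unfolding j_def by linarith
          have lo: "real j / real L \<le> t"
          proof -
            have "real j \<le> real L * t"
              using t unfolding j_def by (auto simp: min_def of_nat_nat le_nat_iff) linarith+
            then show ?thesis using L1 by (simp add: divide_le_eq mult.commute)
          qed
          have hi: "t \<le> real (j + 1) / real L"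
          proof (cases "nat \<lfloor>real L * t\<rfloor> \<le> L - 1")
            case True
            then have "j = nat \<lfloor>real L * t\<rfloor>" unfolding j_def by simp
            then have "real L * t \<le> real j + 1" using t by (simp add: of_nat_nat)
            then show ?thesis using L1 by (simp add: le_divide_eq mult.commute)
          next
            case False
            then have "j = L - 1" unfolding j_def by simp
            then have "real (j + 1) = real L" using L1 by simp
            then show ?thesis using t L1 by simp
          qed
          have g0: "real j / real L \<in> {0..1}" using jL by auto
          have g1: "real (j + 1) / real L \<in> {0..1}" using jL by auto
          have step: "real (j + 1) / real L - real j / real L = 1 / real L" using L1 by (simp add: field_simps)
          have up: "alpha_n n tr k t \<le> alpha_n n tr k (real (j + 1) / real L)"
            by (rule alpha_n_mono[OF T n hi t g1])
          have dn: "alpha_n n tr k (real j / real L) \<le> alpha_n n tr k t"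
            by (rule alpha_n_mono[OF T n lo g0 t])
          have al1: "al c (real (j + 1) / real L) k - al c t k \<le> 1 / real L"
            using al_lip(2)[OF c t g1 hi, of k] hi lo step by linarith
          have al2: "al c t k - al c (real j / real L) k \<le> 1 / real L"
            using al_lip(2)[OF c g0 t lo, of k] hi lo step by linarith
          have al3: "0 \<le> al c t k - al c (real j / real L) k" using al_lip(1)[OF c g0 t lo] .
          have al4: "0 \<le> al c (real (j + 1) / real L) k - al c t k" using al_lip(1)[OF c t g1 hi] .
          have gj: "\<bar>alpha_n n tr k (real j / real L) - al c (real j / real L) k\<bar> \<le> eps / 2" using good jL by simp
          have gj1: "\<bar>alpha_n n tr k (real (j + 1) / real L) - al c (real (j + 1) / real L) k\<bar> \<le> eps / 2"
            using good[of "j + 1"] jL by simp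
          have "\<bar>alpha_n n tr k t - al c t k\<bar> < eps"
            using up dn al1 al2 al3 al4 gj gj1 Leps by linarith
          then show False using bad by simp
        qed
      qed
      have "measure_pmf.prob ?M {tr. \<exists>t\<in>{0..1}. \<exists>k\<in>{1..K}. \<bar>alpha_n n tr k t - al c t k\<bar> > eps}
          = measure_pmf.prob ?M ({tr. \<exists>t\<in>{0..1}. \<exists>k\<in>{1..K}. \<bar>alpha_n n tr k t - al c t k\<bar> > eps} \<inter> set_pmf ?M)"
        by (simp add: measure_Int_set_pmf)
      also have "\<dots> \<le> measure_pmf.prob ?M (\<Union>g\<in>G. A n g)"
        by (rule measure_pmf.finite_measure_mono[OF incl]) simp
      also have "\<dots> \<le> (\<Sum>g\<in>G. measure_pmf.prob ?M (A n g))"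
        by (rule measure_pmf.finite_measure_subadditive_finite[OF fin]) simp
      finally show "measure_pmf.prob ?M {tr. \<exists>t\<in>{0..1}. \<exists>k\<in>{1..K}. \<bar>alpha_n n tr k t - al c t k\<bar> > eps}
          \<le> (\<Sum>g\<in>G. measure_pmf.prob ?M (A n g))" .
    qed
  qed
qed

primrec run :: "nat \<Rightarrow> real \<Rightarrow> nat \<Rightarrow> sfap_state \<Rightarrow> sfap_state pmf" where
  "run K p 0 s = return_pmf s"
| "run K p (Suc t) s = bind_pmf (explore_step K p s) (run K p t)"

lemma run_Suc': "run K p (Suc t) s = bind_pmf (run K p t s) (explore_step K p)"
proof (induction t arbitrary: s)
  case 0
  have "run K p 0 = return_pmf" by (rule ext) simp
  then show ?case by (simp add: bind_return_pmf bind_return_pmf')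
next
  case (Suc t)
  have "run K p (Suc (Suc t)) s = bind_pmf (explore_step K p s) (run K p (Suc t))" by (simp only: run.simps)
  also have "\<dots> = bind_pmf (explore_step K p s) (\<lambda>s'. bind_pmf (run K p t s') (explore_step K p))"
    by (intro bind_pmf_cong refl) (rule Suc.IH)
  also have "\<dots> = bind_pmf (run K p (Suc t) s) (explore_step K p)" by (simp add: bind_assoc_pmf)
  finally show ?case .
qed

lemma map_last_traj: "map_pmf last (explore_traj K p n t) = run K p t (Map.empty, {1..n})"
proof (induction t)
  case 0 then show ?case by simp
next
  case (Suc t)
  have "map_pmf last (explore_traj K p n (Suc t)) = bind_pmf (explore_traj K p n t) (\<lambda>tr. explore_step K p (last tr))"
    by (simp add: map_bind_pmf pmf.map_comp o_def)
  also have "\<dots> = bind_pmf (map_pmf last (explore_traj K p n t)) (explore_step K p)"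
    by (simp add: bind_map_pmf)
  also have "\<dots> = run K p (Suc t) (Map.empty, {1..n})" using Suc by (simp only: run_Suc')
  finally show ?case .
qed

definition PS :: "nat set \<Rightarrow> nat set \<Rightarrow> (nat \<times> nat) set" where
  "PS W U = {(i, j). i < j \<and> i \<in> W \<union> U \<and> j \<in> W \<union> U \<and> (i \<in> U \<or> j \<in> U)}"

definition mkE :: "(nat \<times> nat \<Rightarrow> bool) \<Rightarrow> nat \<Rightarrow> nat \<Rightarrow> bool" where
  "mkE X v u \<longleftrightarrow> v \<noteq> u \<and> X (min u v, max u v)"

lemma sfap_assign_cong:
  "(\<And>w u. w \<in> set vs \<Longrightarrow> E w u = E' w u) \<Longrightarrow> sfap_assign K E g vs = sfap_assign K E' g vs"
proof (induction vs arbitrary: g)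
  case Nil then show ?case by simp
next
  case (Cons v vs)
  have "{k. \<exists>u. E v u \<and> g u = Some k} = {k. \<exists>u. E' v u \<and> g u = Some k}" using Cons.prems by auto
  then show ?case using Cons by (simp add: Let_def)
qed

lemma finite_PS: "finite W \<Longrightarrow> finite U \<Longrightarrow> finite (PS W U)"
  by (rule finite_subset[of _ "(W \<union> U) \<times> (W \<union> U)"]) (auto simp: PS_def)

lemma couple:
  assumes "finite U" "finite (dom g)" "dom g \<inter> U = {}"
  shows "bind_pmf (Pi_pmf (PS (dom g) U) False (\<lambda>_. bernoulli_pmf p))
           (\<lambda>X. map_pmf (sfap_assign K (mkE X) g) (pmf_of_set (permutations_of_set U)))
         = map_pmf fst (run K p (card U) (g, U))"
  using assms
proof (induction "card U" arbitrary: g U)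
  case 0
  then have U: "U = {}" by simp
  have "PS (dom g) {} = {}" by (auto simp: PS_def)
  then show ?case using U by (simp add: map_pmf_def bind_return_pmf pmf_of_set_singleton)
next
  case (Suc m)
  have Une: "U \<noteq> {}" using Suc.hyps(2) by auto
  have finU: "finite U" and fing: "finite (dom g)" and disj: "dom g \<inter> U = {}" using Suc.prems by auto
  let ?B = "\<lambda>_::nat \<times> nat. bernoulli_pmf p"
  let ?Bs = "\<lambda>_::nat. bernoulli_pmf p"
  define XV where "XV v = (\<lambda>u. (min u v, max u v)) ` dom g" for v
  define merge where "merge v X1 X2 = (\<lambda>x. if x \<in> XV v then X1 x else X2 x)" for v and X1 X2 :: "nat \<times> nat \<Rightarrow> bool"
  define colE where "colE E v = (let F = {1..K} - {k. \<exists>u. E v u \<and> g u = Some k} in if F = {} then 0 else Min F)" for E :: "nat \<Rightarrow> nat \<Rightarrow> bool" and v :: nat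
  have assign: "sfap_assign K E g (v # vs) = sfap_assign K E (g(v \<mapsto> colE E v)) vs" for E v vs
    by (simp add: colE_def Let_def)
  have RHS: "map_pmf fst (run K p (card U) (g, U)) =
      bind_pmf (pmf_of_set U) (\<lambda>v. bind_pmf (Pi_pmf (dom g) False ?Bs)
        (\<lambda>S. map_pmf fst (run K p m (g(v \<mapsto> colS K g S), U - {v}))))"
    unfolding Suc.hyps(2)[symmetric] run.simps explore_step_alt
    by (simp add: map_bind_pmf bind_map_pmf bind_assoc_pmf)
  have inner: "bind_pmf (Pi_pmf (PS (dom g) U) False ?B)
           (\<lambda>X. map_pmf (sfap_assign K (mkE X) (g(v \<mapsto> colE (mkE X) v))) (pmf_of_set (permutations_of_set (U - {v}))))
      = bind_pmf (Pi_pmf (dom g) False ?Bs) (\<lambda>S. map_pmf fst (run K p m (g(v \<mapsto> colS K g S), U - {v})))"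
    if v: "v \<in> U" for v
  proof -
    define h where "h u = (min u v, max u v)" for u
    define P' where "P' = PS (insert v (dom g)) (U - {v})"
    have vd: "v \<notin> dom g" using v disj by auto
    have XVh: "XV v = h ` dom g" unfolding XV_def h_def ..
    have split: "PS (dom g) U = XV v \<union> P'"
    proof (intro equalityI subsetI)
      fix x assume x: "x \<in> PS (dom g) U"
      obtain i j where ij: "x = (i, j)" by fastforce
      show "x \<in> XV v \<union> P'"
      proof (cases "(i = v \<and> j \<in> dom g) \<or> (j = v \<and> i \<in> dom g)")
        case True
        then have "x = h (if i = v then j else i)" using x ij unfolding h_def PS_def by auto
        moreover have "(if i = v then j else i) \<in> dom g" using True by auto
        ultimately show ?thesis unfolding XVh by auto
      next
        case False
        then show ?thesis using x ij disj unfolding P'_def PS_def by auto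
      qed
    next
      fix x assume x: "x \<in> XV v \<union> P'"
      then show "x \<in> PS (dom g) U"
      proof
        assume "x \<in> XV v"
        then obtain u where u: "u \<in> dom g" "x = h u" unfolding XVh by auto
        then have "u \<noteq> v" using vd by auto
        then show ?thesis using u v unfolding h_def PS_def by (auto simp: min_def max_def)
      next
        assume "x \<in> P'"
        then show ?thesis using v unfolding P'_def PS_def by auto
      qed
    qed
    have disj2: "XV v \<inter> P' = {}"
      unfolding XV_def P'_def PS_def using v disj by (auto simp: min_def max_def split: if_splits)
    have finXV: "finite (XV v)" unfolding XV_def using fing by simp
    have finP': "finite P'" unfolding P'_def using fing finU by (intro finite_PS) auto
    have col: "colE (mkE (merge v X1 X2)) v = colS K g (X1 \<circ> h)" for X1 X2
    proof -
      have "{k. \<exists>u. mkE (merge v X1 X2) v u \<and> g u = Some k} = {k. \<exists>u\<in>dom g. (X1 \<circ> h) u \<and> g u = Some k}"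
      proof (intro Collect_cong iffI)
        fix k assume "\<exists>u. mkE (merge v X1 X2) v u \<and> g u = Some k"
        then obtain u where u: "mkE (merge v X1 X2) v u" "g u = Some k" by blast
        then have ud: "u \<in> dom g" by auto
        then have "h u \<in> XV v" unfolding XVh by simp
        then show "\<exists>u\<in>dom g. (X1 \<circ> h) u \<and> g u = Some k"
          using u ud unfolding mkE_def merge_def h_def by auto
      next
        fix k assume "\<exists>u\<in>dom g. (X1 \<circ> h) u \<and> g u = Some k"
        then obtain u where u: "u \<in> dom g" "X1 (h u)" "g u = Some k" by auto
        then have "h u \<in> XV v" "u \<noteq> v" using vd unfolding XVh by auto
        then show "\<exists>u. mkE (merge v X1 X2) v u \<and> g u = Some k"
          using u unfolding mkE_def merge_def h_def by auto
      qed
      moreover have "{1..K} - {k. \<exists>u\<in>dom g. (X1 \<circ> h) u \<and> g u = Some k}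
          = {1..K} - {k. 1 \<le> k \<and> (\<exists>u\<in>dom g. (X1 \<circ> h) u \<and> g u = Some k)}" by auto
      ultimately show ?thesis unfolding colE_def colS_def Let_def by (simp add: conj_commute)
    qed
    have cong: "sfap_assign K (mkE (merge v X1 X2)) g' vs = sfap_assign K (mkE X2) g' vs"
      if vs: "vs \<in> permutations_of_set (U - {v})" for X1 X2 g' vs
    proof (rule sfap_assign_cong)
      fix w u assume w: "w \<in> set vs"
      then have wU: "w \<in> U" "w \<noteq> v" using vs by (auto simp: permutations_of_set_def)
      then have wd: "w \<notin> dom g" using disj by auto
      have "(min u w, max u w) \<notin> XV v" if "u \<noteq> w"
      proof
        assume "(min u w, max u w) \<in> XV v"
        then obtain u' where u': "u' \<in> dom g" "(min u w, max u w) = (min u' v, max u' v)" unfolding XV_def by auto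
        then have "w = u' \<or> w = v" using that by (auto simp: min_def max_def split: if_splits)
        then show False using u' wU wd by auto
      qed
      then show "mkE (merge v X1 X2) w u = mkE X2 w u" unfolding mkE_def merge_def by auto
    qed
    have "Pi_pmf (PS (dom g) U) False ?B = map_pmf (\<lambda>(X1, X2). merge v X1 X2) (pair_pmf (Pi_pmf (XV v) False ?B) (Pi_pmf P' False ?B))"
      unfolding split merge_def by (rule Pi_pmf_union[OF finXV finP' disj2])
    then have "bind_pmf (Pi_pmf (PS (dom g) U) False ?B)
           (\<lambda>X. map_pmf (sfap_assign K (mkE X) (g(v \<mapsto> colE (mkE X) v))) (pmf_of_set (permutations_of_set (U - {v}))))
        = bind_pmf (Pi_pmf (XV v) False ?B) (\<lambda>X1. bind_pmf (Pi_pmf P' False ?B) (\<lambda>X2.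
            map_pmf (sfap_assign K (mkE (merge v X1 X2)) (g(v \<mapsto> colS K g (X1 \<circ> h)))) (pmf_of_set (permutations_of_set (U - {v})))))"
      by (simp add: pair_pmf_def bind_map_pmf bind_assoc_pmf bind_return_pmf col)
    also have "\<dots> = bind_pmf (Pi_pmf (XV v) False ?B) (\<lambda>X1. bind_pmf (Pi_pmf P' False ?B) (\<lambda>X2.
            map_pmf (sfap_assign K (mkE X2) (g(v \<mapsto> colS K g (X1 \<circ> h)))) (pmf_of_set (permutations_of_set (U - {v})))))"
    proof (intro bind_pmf_cong refl map_pmf_cong)
      fix X1 X2 vs assume "vs \<in> set_pmf (pmf_of_set (permutations_of_set (U - {v})))"
      then have "vs \<in> permutations_of_set (U - {v})" using finU by (subst (asm) set_pmf_of_set) auto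
      then show "sfap_assign K (mkE (merge v X1 X2)) (g(v \<mapsto> colS K g (X1 \<circ> h))) vs
               = sfap_assign K (mkE X2) (g(v \<mapsto> colS K g (X1 \<circ> h))) vs" by (rule cong)
    qed
    also have "\<dots> = bind_pmf (Pi_pmf (XV v) False ?B) (\<lambda>X1. map_pmf fst (run K p m (g(v \<mapsto> colS K g (X1 \<circ> h)), U - {v})))"
    proof (intro bind_pmf_cong refl)
      fix X1
      let ?g' = "g(v \<mapsto> colS K g (X1 \<circ> h))"
      have dg: "dom ?g' = insert v (dom g)" by simp
      have cU: "m = card (U - {v})" using Suc.hyps(2) v finU by simp
      have "bind_pmf (Pi_pmf (PS (dom ?g') (U - {v})) False ?B)
             (\<lambda>X. map_pmf (sfap_assign K (mkE X) ?g') (pmf_of_set (permutations_of_set (U - {v}))))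
          = map_pmf fst (run K p (card (U - {v})) (?g', U - {v}))"
        by (rule Suc.hyps(1)[OF cU]) (use finU fing disj in auto)
      then show "bind_pmf (Pi_pmf P' False ?B) (\<lambda>X2. map_pmf (sfap_assign K (mkE X2) ?g') (pmf_of_set (permutations_of_set (U - {v}))))
          = map_pmf fst (run K p m (?g', U - {v}))"
        unfolding P'_def dg cU[symmetric] .
    qed
    also have "\<dots> = bind_pmf (map_pmf (\<lambda>X1. X1 \<circ> h) (Pi_pmf (XV v) False ?B)) (\<lambda>S. map_pmf fst (run K p m (g(v \<mapsto> colS K g S), U - {v})))"
      by (simp add: bind_map_pmf)
    also have "map_pmf (\<lambda>X1. X1 \<circ> h) (Pi_pmf (XV v) False ?B) = Pi_pmf (dom g) False ?Bs"
    proof (rule Pi_pmf_bij_betw[symmetric])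
      show "finite (dom g)" by (rule fing)
      show "bij_betw h (dom g) (XV v)" unfolding XVh
        by (rule inj_on_imp_bij_betw) (auto simp: inj_on_def h_def min_def max_def split: if_splits)
      show "\<And>x. x \<notin> dom g \<Longrightarrow> h x \<notin> XV v"
        using vd unfolding XV_def h_def by (auto simp: min_def max_def split: if_splits)
    qed
    finally show ?thesis .
  qed
  have "bind_pmf (Pi_pmf (PS (dom g) U) False ?B)
           (\<lambda>X. map_pmf (sfap_assign K (mkE X) g) (pmf_of_set (permutations_of_set U)))
        = bind_pmf (Pi_pmf (PS (dom g) U) False ?B) (\<lambda>X. bind_pmf (pmf_of_set U) (\<lambda>v.
             map_pmf (sfap_assign K (mkE X) (g(v \<mapsto> colE (mkE X) v))) (pmf_of_set (permutations_of_set (U - {v})))))"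
    unfolding random_permutation_of_set[OF finU Une]
    by (simp add: map_bind_pmf map_pmf_def[symmetric] pmf.map_comp o_def assign del: sfap_assign.simps)
  also have "\<dots> = bind_pmf (pmf_of_set U) (\<lambda>v. bind_pmf (Pi_pmf (PS (dom g) U) False ?B) (\<lambda>X.
             map_pmf (sfap_assign K (mkE X) (g(v \<mapsto> colE (mkE X) v))) (pmf_of_set (permutations_of_set (U - {v})))))"
    by (rule bind_commute_pmf)
  also have "\<dots> = bind_pmf (pmf_of_set U) (\<lambda>v. bind_pmf (Pi_pmf (dom g) False ?Bs)
        (\<lambda>S. map_pmf fst (run K p m (g(v \<mapsto> colS K g S), U - {v}))))"
    by (intro bind_pmf_cong refl inner) (use finU Une in auto)
  also have "\<dots> = map_pmf fst (run K p (card U) (g, U))" using RHS by simp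
  finally show ?case .
qed

lemma weak_conv_point:
  fixes M :: "nat \<Rightarrow> real pmf" and a :: real
  assumes lim: "\<And>e. e > 0 \<Longrightarrow> (\<lambda>n. measure_pmf.prob (M n) {x. \<bar>x - a\<bar> > e}) \<longlonglongrightarrow> 0"
  shows "weak_conv_m (\<lambda>n. measure_pmf (M n)) (return borel a)"
  unfolding weak_conv_m_def weak_conv_def
proof (intro allI impI)
  fix x assume cont: "isCont (cdf (return borel a)) x"
  have cdfR: "cdf (return borel a) y = (if a \<le> y then 1 else 0)" for y
    unfolding cdf_def by (subst measure_return) (auto simp: indicator_def)
  show "(\<lambda>n. cdf (measure_pmf (M n)) x) \<longlonglongrightarrow> cdf (return borel a) x"
  proof (cases x a rule: linorder_cases)
    case equal
    have seq: "(\<lambda>m::nat. a - 1 / real (Suc m)) \<longlonglongrightarrow> a" by real_asymp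
    have "(\<lambda>m. cdf (return borel a) (a - 1 / real (Suc m))) \<longlonglongrightarrow> cdf (return borel a) a"
      using isCont_tendsto_compose[OF cont[unfolded equal] seq] .
    moreover have "(\<lambda>m. cdf (return borel a) (a - 1 / real (Suc m))) = (\<lambda>m. 0)"
      by (rule ext) (simp add: cdfR)
    ultimately have "(\<lambda>m::nat. 0::real) \<longlonglongrightarrow> 1" by (simp add: cdfR)
    then have False using LIMSEQ_unique[OF tendsto_const] by fastforce
    then show ?thesis ..
  next
    case less
    let ?e = "(a - x) / 2"
    have e: "?e > 0" using less by simp
    have z: "cdf (return borel a) x = 0" using less cdfR by simp
    show ?thesis unfolding z
    proof (rule tendsto_sandwich[OF _ _ tendsto_const lim[OF e]])
      show "\<forall>\<^sub>F n in sequentially. 0 \<le> cdf (measure_pmf (M n)) x" by (simp add: cdf_def)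
      show "\<forall>\<^sub>F n in sequentially. cdf (measure_pmf (M n)) x \<le> measure_pmf.prob (M n) {y. \<bar>y - a\<bar> > ?e}"
        unfolding cdf_def using less
        by (intro always_eventually allI measure_pmf.finite_measure_mono) auto
    qed
  next
    case greater
    let ?e = "(x - a) / 2"
    have e: "?e > 0" using greater by simp
    have "(\<lambda>n. 1 - measure_pmf.prob (M n) {y. \<bar>y - a\<bar> > ?e}) \<longlonglongrightarrow> 1 - 0"
      by (intro tendsto_diff tendsto_const lim[OF e])
    then have l1: "(\<lambda>n. 1 - measure_pmf.prob (M n) {y. \<bar>y - a\<bar> > ?e}) \<longlonglongrightarrow> 1" by simp
    have z: "cdf (return borel a) x = 1" using greater cdfR by simp
    show ?thesis unfolding z
    proof (rule tendsto_sandwich[OF _ _ l1 tendsto_const])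
      show "\<forall>\<^sub>F n in sequentially. cdf (measure_pmf (M n)) x \<le> 1" by (simp add: cdf_def)
      show "\<forall>\<^sub>F n in sequentially. 1 - measure_pmf.prob (M n) {y. \<bar>y - a\<bar> > ?e} \<le> cdf (measure_pmf (M n)) x"
      proof (intro always_eventually allI)
        fix n
        have "measure_pmf.prob (M n) (UNIV - {..x}) \<le> measure_pmf.prob (M n) {y. \<bar>y - a\<bar> > ?e}"
          using greater by (intro measure_pmf.finite_measure_mono) auto
        moreover have "measure_pmf.prob (M n) (UNIV - {..x}) = 1 - measure_pmf.prob (M n) {..x}"
          by (subst measure_pmf.prob_compl[symmetric]) auto
        ultimately show "1 - measure_pmf.prob (M n) {y. \<bar>y - a\<bar> > ?e} \<le> cdf (measure_pmf (M n)) x"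
          unfolding cdf_def by simp
      qed
    qed
  qed
qed

lemma mkE_eq: "(\<lambda>X v u. v \<noteq> u \<and> X (min u v, max u v)) = mkE"
  by (intro ext) (simp add: mkE_def)

lemma PS0: "{(i, j). i \<in> {1..n} \<and> j \<in> {1..n} \<and> i < j} = PS (dom (Map.empty :: nat \<Rightarrow> nat option)) {1..n}"
  unfolding PS_def by auto

lemma sfap_model_eq:
  "map_pmf (\<lambda>g. real (N_count g k) / real n) (sfap_model K n p)
   = map_pmf (\<lambda>tr. alpha_n n tr k 1) (explore_traj K p n n)"
proof -
  have er: "erdos_renyi n p = map_pmf mkE (Pi_pmf (PS (dom (Map.empty :: nat \<Rightarrow> nat option)) {1..n}) False (\<lambda>_. bernoulli_pmf p))"
    unfolding erdos_renyi_def mkE_eq PS0[symmetric] ..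
  have s1: "sfap_model K n p = bind_pmf (Pi_pmf (PS (dom (Map.empty :: nat \<Rightarrow> nat option)) {1..n}) False (\<lambda>_. bernoulli_pmf p))
           (\<lambda>X. map_pmf (sfap_assign K (mkE X) Map.empty) (pmf_of_set (permutations_of_set {1..n})))"
    unfolding sfap_model_def by (simp add: er bind_map_pmf)
  have s2: "bind_pmf (Pi_pmf (PS (dom (Map.empty :: nat \<Rightarrow> nat option)) {1..n}) False (\<lambda>_. bernoulli_pmf p))
           (\<lambda>X. map_pmf (sfap_assign K (mkE X) Map.empty) (pmf_of_set (permutations_of_set {1..n})))
      = map_pmf fst (run K p (card {1..n}) (Map.empty, {1..n}))"
    by (rule couple) auto
  have s3: "map_pmf fst (run K p (card {1..n}) (Map.empty, {1..n})) = map_pmf (fst \<circ> last) (explore_traj K p n n)"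
  proof -
    have cn: "card {1..n} = n" by simp
    show ?thesis unfolding cn map_last_traj[symmetric] pmf.map_comp ..
  qed
  have e: "sfap_model K n p = map_pmf (fst \<circ> last) (explore_traj K p n n)" using s1 s2 s3 by simp
  show ?thesis
    unfolding e pmf.map_comp
  proof (intro map_pmf_cong refl)
    fix tr assume tr: "tr \<in> set_pmf (explore_traj K p n n)"
    then have "length tr = Suc n" using traj_props[of n n K p] by (auto simp: TRP_def)
    then have "last tr = tr ! n" by (rule last_len)
    then show "((\<lambda>g. real (N_count g k) / real n) \<circ> (fst \<circ> last)) tr = alpha_n n tr k 1"
      by (simp add: alpha_n_eq N_count_def cnt_def)
  qed
qed

theorem theorem3:
  fixes c :: real and K :: nat
  assumes "c > 0" and "K \<ge> 1"
  shows "\<exists>\<alpha>. solves_sfap_ie c K \<alpha>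
     \<and> (\<forall>\<beta>. solves_sfap_ie c K \<beta> \<longrightarrow> (\<forall>t\<in>{0..1}. \<forall>k\<in>{1..K}. \<beta> t k = \<alpha> t k))
     \<and> (\<forall>\<epsilon>>0. (\<lambda>n. measure_pmf.prob (explore_traj K (c / real n) n n)
            {tr. \<exists>t\<in>{0..1}. \<exists>k\<in>{1..K}. \<bar>alpha_n n tr k t - \<alpha> t k\<bar> > \<epsilon>}) \<longlonglongrightarrow> 0)
     \<and> (\<forall>k\<in>{1..K}. weak_conv_m
           (\<lambda>n. measure_pmf (map_pmf (\<lambda>g. real (N_count g k) / real n) (sfap_model K n (c / real n))))
           (return borel (\<alpha> 1 k)))"
proof (intro exI[of _ "al c"] conjI allI impI ballI)
  have c: "c > 0" by (rule assms(1))
  show "solves_sfap_ie c K (al c)" by (rule al_solves[OF c])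
  show "\<beta> t k = al c t k" if "solves_sfap_ie c K \<beta>" "t \<in> {0..1}" "k \<in> {1..K}" for \<beta> t k
    using al_unique[OF c that(1)] that(2,3) by blast
  show "(\<lambda>n. measure_pmf.prob (explore_traj K (c / real n) n n)
            {tr. \<exists>t\<in>{0..1}. \<exists>k\<in>{1..K}. \<bar>alpha_n n tr k t - al c t k\<bar> > \<epsilon>}) \<longlonglongrightarrow> 0"
    if "\<epsilon> > 0" for \<epsilon>
    by (rule unif_conv[OF c that])
  fix k assume k: "k \<in> {1..K}"
  show "weak_conv_m (\<lambda>n. measure_pmf (map_pmf (\<lambda>g. real (N_count g k) / real n) (sfap_model K n (c / real n))))
           (return borel (al c 1 k))"
  proof (rule weak_conv_point)
    fix e :: real assume e: "e > 0"
    have "measure_pmf.prob (map_pmf (\<lambda>g. real (N_count g k) / real n) (sfap_model K n (c / real n))) {x. \<bar>x - al c 1 k\<bar> > e}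
        = measure_pmf.prob (explore_traj K (c / real n) n n) {tr. \<bar>alpha_n n tr k 1 - al c 1 k\<bar> > e}" for n
      unfolding sfap_model_eq by (simp add: measure_map_pmf vimage_def)
    then show "(\<lambda>n. measure_pmf.prob (map_pmf (\<lambda>g. real (N_count g k) / real n) (sfap_model K n (c / real n))) {x. \<bar>x - al c 1 k\<bar> > e}) \<longlonglongrightarrow> 0"
      using pt_conv[OF c _ k e, of 1] by simp
  qed
qed

end
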